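(* Consider a Pandora's box problem with sequential inspection with $N$ boxes partitioned into $K$ classes, class $k\in[K]$ containing $N_k$ boxes that are identically distributed (same joint distribution of $(V,T)$ and same costs). Suppose there exists $\theta>0$ such that $N_k>\theta N$ for all $k\in[K]$. Let $i\in[K]$ be the class of boxes that initially attains the largest opening threshold $\sigma_M=\max_{j}\max\{\sigma_j^F,\sigma_j^P\}$ (all boxes closed), and let $u=\Pr[V_i>\sigma_i^F]$, $q=\Pr[\sigma_i^{F\mid T_i}>\sigma_i^P]$ and $p=\Pr[V_i>\sigma_i^P\mid \sigma_i^{F\mid T_i}>\sigma_i^P]$ for a box of class $i$. Then: (1) If $\sigma_i^F=\sigma_M$, the policy that always F-opens closed boxes of class $i$ and applies the stopping rule (stop as soon as the best prize found so far is at least every remaining opening threshold) has expected profit at least $(1-(1-u)^{\theta N})$ times the optimal expected profit. (2) If $\sigma_i^P=\sigma_M$, the policy that always P-opens closed boxes of class $i$, F-opens a partially opened box when its revealed type $t$ satisfies $\sigma_i^{F\mid t}>\sigma_i^P$, and applies the same stopping rule has expected profit at least $(1-(1-pq)^{\theta N})$ times the optimal expected profit.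
   Context: Pandora's box problem with sequential inspection: each box $j$ has a type $T_j$ in a finite set and a nonnegative prize $V_j$ with known joint distribution; boxes are independent. A closed box can be F-opened at cost $c_j^F$ (revealing $V_j$) or P-opened at cost $c_j^P$ (revealing $T_j$); a partially opened box can later be F-opened at cost $c_j^F$. The decision maker may stop at any time and collect the largest prize among F-opened boxes; the objective is expected collected prize minus total inspection costs. Thresholds: $\sigma_j^F$ solves $\mathbb{E}[(V_j-\sigma)^+]=c_j^F$; $\sigma_j^{F\mid t}$ solves $\mathbb{E}[(V_j-\sigma)^+\mid T_j=t]=c_j^F$; $\sigma_j^P$ solves $\mathbb{E}\big[\max\{0,-c_j^F+\mathbb{E}[(V_j-\sigma)^+\mid T_j]\}\big]=c_j^P$. The opening thresholds of a closed box are $\sigma_j^F,\sigma_j^P$ and of a partially opened box with revealed type $t_j$ is $\sigma_j^{F\mid t_j}$. "A factor $\alpha$-close to the optimum" means expected profit at least $\alpha$ times the optimal expected profit. *)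

theory Defs
  imports "HOL-Probability.Probability"
begin

text \<open>Box j < N has a joint law D j of
(T_j, V_j) on a finite type set 't (first component = type, second = prize). Boxes are independent: the outcome of a box
is drawn from its own law when it is inspected.\<close>

datatype 't bstate = Closed | Part 't | Full real
datatype act = FOpen | POpen

definition cond_exp :: "('t \<times> real) measure \<Rightarrow> 't \<Rightarrow> (real \<Rightarrow> real) \<Rightarrow> real" where
  "cond_exp M t g = (\<integral>x. indicator {t} (fst x) * g (snd x) \<partial>M) / measure M ({t} \<times> UNIV)"

definition sigF :: "('t \<times> real) measure \<Rightarrow> real \<Rightarrow> real" where
  "sigF M c = (THE \<sigma>. (\<integral>x. max 0 (snd x - \<sigma>) \<partial>M) = c)"

definition sigFc :: "('t \<times> real) measure \<Rightarrow> real \<Rightarrow> 't \<Rightarrow> real" where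
  "sigFc M c t = (THE \<sigma>. cond_exp M t (\<lambda>v. max 0 (v - \<sigma>)) = c)"

definition sigP :: "('t \<times> real) measure \<Rightarrow> real \<Rightarrow> real \<Rightarrow> real" where
  "sigP M cf cp = (THE \<sigma>. (\<integral>x. max 0 (- cf + cond_exp M (fst x) (\<lambda>v. max 0 (v - \<sigma>))) \<partial>M) = cp)"

definition best :: "nat \<Rightarrow> (nat \<Rightarrow> 't bstate) \<Rightarrow> real" where
  "best N s = Max (insert 0 {v. \<exists>j<N. s j = Full v})"

text \<open>Optimal value (Bellman recursion with fuel; fuel 2N suffices from the
initial state since every box admits at most two inspections).\<close>
primrec optf :: "nat \<Rightarrow> (nat \<Rightarrow> ('t \<times> real) measure) \<Rightarrow> (nat \<Rightarrow> real) \<Rightarrow> (nat \<Rightarrow> real)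
    \<Rightarrow> nat \<Rightarrow> (nat \<Rightarrow> 't bstate) \<Rightarrow> real" where
  "optf N D cF cP 0 s = best N s"
| "optf N D cF cP (Suc n) s = Max (insert (best N s) (\<Union>j\<in>{..<N}. (case s j of
      Closed \<Rightarrow> {- cF j + (\<integral>x. optf N D cF cP n (s(j := Full (snd x))) \<partial>D j),
                 - cP j + (\<integral>x. optf N D cF cP n (s(j := Part (fst x))) \<partial>D j)}
    | Part t \<Rightarrow> {- cF j + cond_exp (D j) t (\<lambda>v. optf N D cF cP n (s(j := Full v)))}
    | Full v \<Rightarrow> {})))"

definition opt_value :: "nat \<Rightarrow> (nat \<Rightarrow> ('t \<times> real) measure) \<Rightarrow> (nat \<Rightarrow> real) \<Rightarrow> (nat \<Rightarrow> real) \<Rightarrow> real" where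
  "opt_value N D cF cP = optf N D cF cP (2 * N) (\<lambda>_. Closed)"

primrec polf :: "nat \<Rightarrow> (nat \<Rightarrow> ('t \<times> real) measure) \<Rightarrow> (nat \<Rightarrow> real) \<Rightarrow> (nat \<Rightarrow> real)
    \<Rightarrow> ((nat \<Rightarrow> 't bstate) \<Rightarrow> (nat \<times> act) option) \<Rightarrow> nat \<Rightarrow> (nat \<Rightarrow> 't bstate) \<Rightarrow> real" where
  "polf N D cF cP \<pi> 0 s = best N s"
| "polf N D cF cP \<pi> (Suc n) s = (case \<pi> s of
      None \<Rightarrow> best N s
    | Some (j, a) \<Rightarrow> (if j < N then (case (a, s j) of
          (FOpen, Closed) \<Rightarrow> - cF j + (\<integral>x. polf N D cF cP \<pi> n (s(j := Full (snd x))) \<partial>D j)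
        | (POpen, Closed) \<Rightarrow> - cP j + (\<integral>x. polf N D cF cP \<pi> n (s(j := Part (fst x))) \<partial>D j)
        | (FOpen, Part t) \<Rightarrow> - cF j + cond_exp (D j) t (\<lambda>v. polf N D cF cP \<pi> n (s(j := Full v)))
        | _ \<Rightarrow> best N s) else best N s))"

definition pol_value where
  "pol_value N D cF cP \<pi> = polf N D cF cP \<pi> (2 * N) (\<lambda>_. Closed)"

definition stop_rule :: "nat \<Rightarrow> (nat \<Rightarrow> ('t \<times> real) measure) \<Rightarrow> (nat \<Rightarrow> real) \<Rightarrow> (nat \<Rightarrow> real)
    \<Rightarrow> (nat \<Rightarrow> 't bstate) \<Rightarrow> bool" where
  "stop_rule N D cF cP s = (\<forall>j<N. (case s j of
      Closed \<Rightarrow> sigF (D j) (cF j) \<le> best N s \<and> sigP (D j) (cF j) (cP j) \<le> best N s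
    | Part t \<Rightarrow> sigFc (D j) (cF j) t \<le> best N s
    | Full v \<Rightarrow> True))"

definition polF :: "nat \<Rightarrow> (nat \<Rightarrow> ('t \<times> real) measure) \<Rightarrow> (nat \<Rightarrow> real) \<Rightarrow> (nat \<Rightarrow> real)
    \<Rightarrow> (nat \<Rightarrow> nat) \<Rightarrow> nat \<Rightarrow> (nat \<Rightarrow> 't bstate) \<Rightarrow> (nat \<times> act) option" where
  "polF N D cF cP cls i s = (if stop_rule N D cF cP s then None else
     (case find (\<lambda>j. cls j = i \<and> s j = Closed) [0..<N] of
        None \<Rightarrow> None | Some j \<Rightarrow> Some (j, FOpen)))"

definition polP :: "nat \<Rightarrow> (nat \<Rightarrow> ('t \<times> real) measure) \<Rightarrow> (nat \<Rightarrow> real) \<Rightarrow> (nat \<Rightarrow> real)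
    \<Rightarrow> (nat \<Rightarrow> nat) \<Rightarrow> nat \<Rightarrow> (nat \<Rightarrow> 't bstate) \<Rightarrow> (nat \<times> act) option" where
  "polP N D cF cP cls i s = (if stop_rule N D cF cP s then None else
     (case find (\<lambda>j. cls j = i \<and> (\<exists>t. s j = Part t \<and> sigFc (D j) (cF j) t > sigP (D j) (cF j) (cP j))) [0..<N] of
        Some j \<Rightarrow> Some (j, FOpen)
      | None \<Rightarrow> (case find (\<lambda>j. cls j = i \<and> s j = Closed) [0..<N] of
          None \<Rightarrow> None | Some j \<Rightarrow> Some (j, POpen))))"

end

theory Submission
  imports Defs
begin

lemma lip_isCont:
  fixes f :: "real \<Rightarrow> real"
  assumes anti: "\<And>x y. x \<le> y \<Longrightarrow> f y \<le> f x"
    and lip: "\<And>x y. x \<le> y \<Longrightarrow> f x \<le> f y + L * (y - x)"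
    and L: "L \<ge> 0"
  shows "isCont f x"
proof -
  have "L-lipschitz_on UNIV f"
  proof (rule lipschitz_onI)
    fix a b :: real
    show "dist (f a) (f b) \<le> L * dist a b"
    proof (cases "a \<le> b")
      case True
      then show ?thesis using anti[OF True] lip[OF True] by (simp add: dist_real_def)
    next
      case False
      then have "b \<le> a" by simp
      then show ?thesis using anti[OF \<open>b \<le> a\<close>] lip[OF \<open>b \<le> a\<close>] by (simp add: dist_real_def)
    qed
  qed (use L in auto)
  then have "continuous_on UNIV f" by (rule lipschitz_on_continuous_on)
  then show ?thesis by (simp add: continuous_on_eq_continuous_at)
qed

lemma root_unique:
  fixes f :: "real \<Rightarrow> real"
  assumes anti: "\<And>x y. x \<le> y \<Longrightarrow> f y \<le> f x"
    and lip: "\<And>x y. x \<le> y \<Longrightarrow> f x \<le> f y + L * (y - x)"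
    and L: "L \<ge> 0"
    and strict: "\<And>x y. x < y \<Longrightarrow> 0 < f y \<Longrightarrow> f y < f x"
    and c: "c > 0" and ea: "\<exists>a. f a \<ge> c" and eb: "\<exists>b. f b \<le> c"
  shows "\<exists>!s. f s = c"
proof -
  obtain a b where a: "f a \<ge> c" and b: "f b \<le> c" using ea eb by blast
  have ex: "\<exists>s. f s = c"
  proof (cases "a \<le> b")
    case True
    have "\<forall>x. a \<le> x \<and> x \<le> b \<longrightarrow> isCont f x" using lip_isCont[OF anti lip L] by blast
    from IVT2[OF b a True this] show ?thesis by blast
  next
    case False
    then have "f a \<le> f b" using anti by simp
    then show ?thesis using a b by (intro exI[of _ a]) simp
  qed
  show ?thesis
  proof (rule ex_ex1I[OF ex])
    fix x y assume xy: "f x = c" "f y = c"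
    show "x = y"
    proof (rule ccontr)
      assume "x \<noteq> y"
      then consider "x < y" | "y < x" by linarith
      then show False
        using strict[of x y] strict[of y x] xy c by fastforce
    qed
  qed
qed

locale pbox =
  fixes M :: "('t::finite \<times> real) measure"
  assumes prob: "prob_space M"
    and sets_eq: "sets M = sets (count_space UNIV \<Otimes>\<^sub>M borel)"
    and int_snd: "integrable M snd"
begin

sublocale prob_space M by (rule prob)

lemma space_eq: "space M = UNIV"
  using sets_eq_imp_space_eq[OF sets_eq] by (simp add: space_pair_measure)

lemma fst_meas: "fst \<in> M \<rightarrow>\<^sub>M count_space UNIV"
  using measurable_fst[of "count_space UNIV" "borel::real measure"]
  by (simp add: measurable_cong_sets[OF sets_eq refl])

lemma snd_meas[measurable]: "snd \<in> borel_measurable M"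
  using measurable_snd[of "count_space UNIV" "borel::real measure"]
  by (simp add: measurable_cong_sets[OF sets_eq refl])

lemma fstfun_meas: "(\<lambda>x. g (fst x)) \<in> borel_measurable M"
  by (rule measurable_compose[OF fst_meas]) simp

lemma sndfun_meas: "g \<in> borel_measurable borel \<Longrightarrow> (\<lambda>x. g (snd x)) \<in> borel_measurable M"
  by (rule measurable_compose[OF snd_meas])

lemma int_lin:
  fixes h :: "'t \<times> real \<Rightarrow> real" and a b :: real
  assumes "h \<in> borel_measurable M" "\<And>x. \<bar>h x\<bar> \<le> a + b * \<bar>snd x\<bar>" "b \<ge> 0"
  shows "integrable M h"
proof (rule Bochner_Integration.integrable_bound[where f="\<lambda>x. a + b * \<bar>snd x\<bar>"])
  show "integrable M (\<lambda>x. a + b * \<bar>snd x\<bar>)"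
  proof (rule Bochner_Integration.integrable_add)
    show "integrable M (\<lambda>x. b * \<bar>snd x\<bar>)"
      using int_snd by (intro integrable_mult_right integrable_abs)
  qed simp
  show "AE x in M. norm (h x) \<le> norm (a + b * \<bar>snd x\<bar>)"
    using assms(2) by (intro AE_I2) (smt (verit, best) real_norm_def)
qed fact

definition Pt :: "'t \<Rightarrow> real" where "Pt t = measure M ({t} \<times> UNIV)"

lemma set_t: "{t} \<times> UNIV \<in> sets M"
  by (simp add: sets_eq pair_measureI)

lemma Pt_nonneg: "0 \<le> Pt t" by (simp add: Pt_def)
lemma Pt_le1: "Pt t \<le> 1" by (simp add: Pt_def)

lemma fst_sum: fixes g :: "'t \<Rightarrow> real" shows "g (fst x) = (\<Sum>t\<in>UNIV. g t * indicator ({t} \<times> UNIV) x)"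
proof -
  have "(\<Sum>t\<in>UNIV. g t * indicator ({t} \<times> UNIV) x) = (\<Sum>t\<in>UNIV. if t = fst x then g t else 0)"
    by (intro sum.cong refl) (cases x, auto simp: indicator_def)
  also have "\<dots> = g (fst x)" by simp
  finally show ?thesis by simp
qed

lemma int_fst: fixes g :: "'t \<Rightarrow> real" shows "integrable M (\<lambda>x. g (fst x))"
  "(\<integral>x. g (fst x) \<partial>M) = (\<Sum>t\<in>UNIV. g t * Pt t)"
proof -
  have eq: "(\<lambda>x. g (fst x)) = (\<lambda>x. \<Sum>t\<in>UNIV. g t * indicator ({t} \<times> UNIV) x)"
    by (rule ext) (rule fst_sum)
  have i: "\<And>t. integrable M (\<lambda>x. g t * indicator ({t} \<times> UNIV) x)"
    using set_t by (intro integrable_mult_right) (simp add: emeasure_eq_measure)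
  show "integrable M (\<lambda>x. g (fst x))" unfolding eq by (intro Bochner_Integration.integrable_sum i)
  show "(\<integral>x. g (fst x) \<partial>M) = (\<Sum>t\<in>UNIV. g t * Pt t)"
    unfolding eq Bochner_Integration.integral_sum[OF i]
    using set_t by (intro sum.cong refl) (simp add: Pt_def emeasure_eq_measure)
qed

lemma sum_Pt: "(\<Sum>t\<in>UNIV. Pt t) = 1"
  using int_fst(2)[of "\<lambda>_. 1"] by (simp add: prob_space)

lemma AE_Pt0: assumes "Pt t = 0" shows "AE x in M. fst x \<noteq> t"
proof -
  have "emeasure M ({t} \<times> UNIV) = 0" using assms
    by (simp add: Pt_def emeasure_eq_measure)
  then have "{t} \<times> UNIV \<in> null_sets M" using set_t by (intro null_setsI)
  from AE_not_in[OF this] show ?thesis by auto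
qed

lemma int_ind0: fixes h :: "'t \<times> real \<Rightarrow> real" assumes "Pt t = 0" shows "(\<integral>x. indicator {t} (fst x) * h x \<partial>M) = 0"
proof (rule integral_eq_zero_AE)
  show "AE x in M. indicator {t} (fst x) * h x = 0"
    using AE_Pt0[OF assms] by eventually_elim (simp add: indicator_def)
qed

lemma int_ind: "(\<integral>x. indicator {t} (fst x) \<partial>M) = Pt t"
  using int_fst(2)[of "indicator {t}"] by (simp add: indicator_def)

lemma Pt_ce: fixes g :: "real \<Rightarrow> real" shows "Pt t * cond_exp M t g = (\<integral>x. indicator {t} (fst x) * g (snd x) \<partial>M)"
  by (cases "Pt t = 0") (auto simp: cond_exp_def Pt_def[symmetric] int_ind0)

lemma ce_nonint: fixes g :: "real \<Rightarrow> real" shows "\<not> integrable M (\<lambda>x. indicator {t} (fst x) * g (snd x)) \<Longrightarrow> cond_exp M t g = 0"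
  by (simp add: cond_exp_def not_integrable_integral_eq)

lemma ce_Pt0: "Pt t = 0 \<Longrightarrow> cond_exp M t g = 0"
  by (simp add: cond_exp_def Pt_def)

end

context pbox begin

definition Fw :: "('t \<Rightarrow> real) \<Rightarrow> real \<Rightarrow> real" where
  "Fw w s = (\<integral>x. w (fst x) * max 0 (snd x - s) \<partial>M)"

lemma meas_w_max: "(\<lambda>x. w (fst x) * max 0 (snd x - s)) \<in> borel_measurable M"
  by (intro borel_measurable_times fstfun_meas borel_measurable_max borel_measurable_const
      borel_measurable_diff snd_meas)

lemma Fw_int:
  assumes w0: "\<And>t. 0 \<le> w t" and w1: "\<And>t. w t \<le> 1"
  shows "integrable M (\<lambda>x. w (fst x) * max 0 (snd x - s))"
proof (rule int_lin[where a="\<bar>s\<bar>" and b=1])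
  show "(\<lambda>x. w (fst x) * max 0 (snd x - s)) \<in> borel_measurable M" by (rule meas_w_max)
  fix x :: "'t \<times> real"
  have "w (fst x) * max 0 (snd x - s) \<le> max 0 (snd x - s)"
    using w1[of "fst x"] w0[of "fst x"] by (intro mult_left_le_one_le) auto
  moreover have "0 \<le> w (fst x) * max 0 (snd x - s)" using w0 by simp
  moreover have "max 0 (snd x - s) \<le> \<bar>s\<bar> + \<bar>snd x\<bar>" by auto
  ultimately have "\<bar>w (fst x) * max 0 (snd x - s)\<bar> = w (fst x) * max 0 (snd x - s)"
    "w (fst x) * max 0 (snd x - s) \<le> \<bar>s\<bar> + \<bar>snd x\<bar>" by linarith+
  then show "\<bar>w (fst x) * max 0 (snd x - s)\<bar> \<le> \<bar>s\<bar> + 1 * \<bar>snd x\<bar>" by linarith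
qed simp

lemma Fw_anti:
  assumes w0: "\<And>t. 0 \<le> w t" and w1: "\<And>t. w t \<le> 1" and xy: "x \<le> y"
  shows "Fw w y \<le> Fw w x"
  unfolding Fw_def
  by (intro integral_mono Fw_int w0 w1 mult_left_mono) (use xy w0 in auto)

lemma Fw_nonneg:
  assumes w0: "\<And>t. 0 \<le> w t"
  shows "0 \<le> Fw w x"
  unfolding Fw_def by (intro integral_nonneg_AE AE_I2) (simp add: w0)

lemma Fw_lip:
  assumes w0: "\<And>t. 0 \<le> w t" and w1: "\<And>t. w t \<le> 1" and xy: "x \<le> y"
  shows "Fw w x \<le> Fw w y + (y - x)"
proof -
  have "Fw w x \<le> (\<integral>z. w (fst z) * max 0 (snd z - y) + (y - x) \<partial>M)"
    unfolding Fw_def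
  proof (intro integral_mono Fw_int w0 w1 Bochner_Integration.integrable_add)
    fix z :: "'t \<times> real"
    have a: "max 0 (snd z - x) \<le> max 0 (snd z - y) + (y - x)" using xy by auto
    have "w (fst z) * max 0 (snd z - x) \<le> w (fst z) * (max 0 (snd z - y) + (y - x))"
      using a w0 by (intro mult_left_mono) auto
    also have "\<dots> \<le> w (fst z) * max 0 (snd z - y) + (y - x)"
    proof -
      have "w (fst z) * (y - x) \<le> y - x"
        using w1[of "fst z"] w0[of "fst z"] xy by (intro mult_left_le_one_le) auto
      then show ?thesis by (simp add: algebra_simps)
    qed
    finally show "w (fst z) * max 0 (snd z - x) \<le> w (fst z) * max 0 (snd z - y) + (y - x)" .
  qed simp
  also have "\<dots> = Fw w y + (y - x)"
    unfolding Fw_def by (subst Bochner_Integration.integral_add) (auto intro: Fw_int w0 w1 simp: prob_space)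
  finally show ?thesis .
qed

lemma Fw_strict:
  assumes w0: "\<And>t. 0 \<le> w t" and w1: "\<And>t. w t \<le> 1" and xy: "x < y"
    and pos: "0 < Fw w y"
  shows "Fw w y < Fw w x"
proof -
  define A where "A = (\<integral>z. w (fst z) * indicator {y<..} (snd z) \<partial>M)"
  have mi: "(\<lambda>z. w (fst z) * indicator {y<..} (snd z)) \<in> borel_measurable M"
    by (intro borel_measurable_times fstfun_meas) measurable
  have iA: "integrable M (\<lambda>z. w (fst z) * indicator {y<..} (snd z))"
  proof (rule int_lin[where a=1 and b=0])
    fix z :: "'t \<times> real"
    show "\<bar>w (fst z) * indicator {y<..} (snd z)\<bar> \<le> 1 + 0 * \<bar>snd z\<bar>"
      using w0[of "fst z"] w1[of "fst z"] by (auto simp: indicator_def)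
  qed (use mi in auto)
  have A0: "0 \<le> A" unfolding A_def by (intro integral_nonneg_AE AE_I2) (simp add: w0)
  have "Fw w y + (y - x) * A = (\<integral>z. w (fst z) * max 0 (snd z - y) + (y - x) * (w (fst z) * indicator {y<..} (snd z)) \<partial>M)"
    unfolding Fw_def A_def
    by (subst Bochner_Integration.integral_add) (auto intro: Fw_int w0 w1 iA)
  also have "\<dots> \<le> Fw w x"
    unfolding Fw_def
  proof (intro integral_mono Fw_int w0 w1 Bochner_Integration.integrable_add integrable_mult_right iA)
    fix z :: "'t \<times> real"
    have "max 0 (snd z - y) + (y - x) * indicator {y<..} (snd z) \<le> max 0 (snd z - x)"
      using xy by (auto simp: indicator_def)
    then have "w (fst z) * (max 0 (snd z - y) + (y - x) * indicator {y<..} (snd z)) \<le> w (fst z) * max 0 (snd z - x)"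
      using w0 by (intro mult_left_mono) auto
    then show "w (fst z) * max 0 (snd z - y) + (y - x) * (w (fst z) * indicator {y<..} (snd z)) \<le> w (fst z) * max 0 (snd z - x)"
      by (simp add: algebra_simps)
  qed
  finally have le: "Fw w y + (y - x) * A \<le> Fw w x" .
  show ?thesis
  proof (cases "A = 0")
    case True
    then have "AE z in M. w (fst z) * indicator {y<..} (snd z) = 0"
      using integral_nonneg_eq_0_iff_AE[OF iA] w0 unfolding A_def by (auto intro: AE_I2)
    then have "AE z in M. w (fst z) * max 0 (snd z - y) = 0"
      by eventually_elim (auto simp: indicator_def split: if_splits)
    then have "Fw w y = 0" unfolding Fw_def by (rule integral_eq_zero_AE)
    then show ?thesis using pos by simp
  next
    case False
    then have "0 < (y - x) * A" using A0 xy by simp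
    then show ?thesis using le by linarith
  qed
qed

lemma F1_int: "integrable M (\<lambda>x. max 0 (snd x - s))"
  using Fw_int[of "\<lambda>_. 1" s] by simp

lemma F1_tendsto: "(\<lambda>n. \<integral>x. max 0 (snd x - real n) \<partial>M) \<longlonglongrightarrow> 0"
proof -
  have "(\<lambda>n. \<integral>x. max 0 (snd x - real n) \<partial>M) \<longlonglongrightarrow> (\<integral>x. 0 \<partial>M)"
  proof (rule integral_dominated_convergence[where w="\<lambda>x. \<bar>snd x\<bar>"])
    show "integrable M (\<lambda>x. \<bar>snd x\<bar>)" using int_snd by (rule integrable_abs)
    show "AE x in M. (\<lambda>n. max 0 (snd x - real n)) \<longlonglongrightarrow> 0"
    proof (intro AE_I2 tendsto_eventually)
      fix x :: "'t \<times> real"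
      obtain k :: nat where "snd x \<le> real k" using real_arch_simple by blast
      then show "\<forall>\<^sub>F n in sequentially. max 0 (snd x - real n) = 0"
        unfolding eventually_sequentially by (intro exI[of _ k]) auto
    qed
    show "AE x in M. norm (max 0 (snd x - real n)) \<le> \<bar>snd x\<bar>" for n
      by (intro AE_I2) auto
  qed (auto intro!: borel_measurable_max borel_measurable_diff snd_meas)
  then show ?thesis by simp
qed

lemma Fw_small:
  assumes w0: "\<And>t. 0 \<le> w t" and w1: "\<And>t. w t \<le> 1" and c: "0 < c"
  shows "\<exists>s. Fw w s < c"
proof -
  from order_tendstoD(2)[OF F1_tendsto c] obtain n where
    n: "(\<integral>x. max 0 (snd x - real n) \<partial>M) < c"
    unfolding eventually_sequentially by auto
  have "Fw w (real n) \<le> (\<integral>x. max 0 (snd x - real n) \<partial>M)"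
    unfolding Fw_def
  proof (intro integral_mono Fw_int F1_int w0 w1)
    fix x :: "'t \<times> real"
    show "w (fst x) * max 0 (snd x - real n) \<le> max 0 (snd x - real n)"
      using w1[of "fst x"] w0[of "fst x"] by (intro mult_left_le_one_le) auto
  qed
  then show ?thesis using n by (intro exI[of _ "real n"]) simp
qed

lemma Fw_big:
  assumes w0: "\<And>t. 0 \<le> w t" and w1: "\<And>t. w t \<le> 1" and W: "0 < (\<integral>x. w (fst x) \<partial>M)"
  shows "\<exists>s. c < Fw w s"
proof -
  define Wt where "Wt = (\<integral>x. w (fst x) \<partial>M)"
  define B where "B = (\<integral>x. w (fst x) * snd x \<partial>M)"
  have iB: "integrable M (\<lambda>x. w (fst x) * snd x)"
  proof (rule int_lin[where a=0 and b=1])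
    show "(\<lambda>x. w (fst x) * snd x) \<in> borel_measurable M"
      by (intro borel_measurable_times fstfun_meas snd_meas)
    fix x :: "'t \<times> real"
    show "\<bar>w (fst x) * snd x\<bar> \<le> 0 + 1 * \<bar>snd x\<bar>"
      using w0[of "fst x"] w1[of "fst x"] by (simp add: abs_mult mult_left_le_one_le)
  qed simp
  define s where "s = - (\<bar>c\<bar> + \<bar>B\<bar> + 1) / Wt"
  have sW: "s * Wt = - (\<bar>c\<bar> + \<bar>B\<bar> + 1)" using W unfolding s_def Wt_def by simp
  have "B - s * Wt = (\<integral>x. w (fst x) * snd x - s * w (fst x) \<partial>M)"
    unfolding B_def Wt_def
    by (subst Bochner_Integration.integral_diff) (auto intro: iB int_fst)
  also have "\<dots> \<le> Fw w s"
    unfolding Fw_def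
  proof (intro integral_mono Fw_int w0 w1 Bochner_Integration.integrable_diff iB integrable_mult_right int_fst)
    fix x :: "'t \<times> real"
    have "w (fst x) * (snd x - s) \<le> w (fst x) * max 0 (snd x - s)"
      using w0 by (intro mult_left_mono) auto
    then show "w (fst x) * snd x - s * w (fst x) \<le> w (fst x) * max 0 (snd x - s)"
      by (simp add: algebra_simps)
  qed
  finally have "B - s * Wt \<le> Fw w s" .
  then have "c < Fw w s" using sW by linarith
  then show ?thesis by blast
qed

end

context pbox begin

lemma F1_eq: "(\<integral>x. max 0 (snd x - s) \<partial>M) = Fw (\<lambda>_. 1) s"
  by (simp add: Fw_def)

lemma ce_eq: "cond_exp M t (\<lambda>v. max 0 (v - s)) = Fw (indicator {t}) s / Pt t"
  by (simp add: cond_exp_def Fw_def Pt_def)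

lemma ind_w0: "\<And>t'. 0 \<le> (indicator {t} t' :: real)" and ind_w1: "\<And>t'. (indicator {t} t' :: real) \<le> 1"
  by (auto simp: indicator_def)

lemma Fwi_anti: "x \<le> y \<Longrightarrow> Fw (indicator {t}) y \<le> Fw (indicator {t}) x"
  by (rule Fw_anti) (auto simp: indicator_def)
lemma Fwi_nonneg: "0 \<le> Fw (indicator {t}) x"
  by (rule Fw_nonneg) (auto simp: indicator_def)
lemma Fwi_lip: "x \<le> y \<Longrightarrow> Fw (indicator {t}) x \<le> Fw (indicator {t}) y + (y - x)"
  by (rule Fw_lip) (auto simp: indicator_def)
lemma Fwi_strict: "x < y \<Longrightarrow> 0 < Fw (indicator {t}) y \<Longrightarrow> Fw (indicator {t}) y < Fw (indicator {t}) x"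
  by (rule Fw_strict) (auto simp: indicator_def)
lemma Fwi_small: "0 < c \<Longrightarrow> \<exists>s. Fw (indicator {t}) s < c"
  by (rule Fw_small) (auto simp: indicator_def)
lemma Fwi_big: assumes "0 < Pt t" shows "\<exists>s. c < Fw (indicator {t}) s"
  by (rule Fw_big) (use assms int_ind[of t] in \<open>auto simp: indicator_def\<close>)

lemma F1_anti: "x \<le> y \<Longrightarrow> (\<integral>z. max 0 (snd z - y) \<partial>M) \<le> (\<integral>z. max 0 (snd z - x) \<partial>M)"
  unfolding F1_eq by (rule Fw_anti) auto

lemma ce_anti: "x \<le> y \<Longrightarrow> cond_exp M t (\<lambda>v. max 0 (v - y)) \<le> cond_exp M t (\<lambda>v. max 0 (v - x))"
  unfolding ce_eq by (intro divide_right_mono Fwi_anti Pt_nonneg)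

lemma ce_nonneg: "0 \<le> cond_exp M t (\<lambda>v. max 0 (v - y))"
  unfolding ce_eq by (intro divide_nonneg_nonneg Fwi_nonneg Pt_nonneg)

lemma sigF_root:
  assumes c: "0 < c"
  shows "(\<integral>x. max 0 (snd x - sigF M c) \<partial>M) = c"
proof -
  let ?f = "Fw (\<lambda>_. 1)"
  have ex: "\<exists>!s. ?f s = c"
  proof (rule root_unique[where L=1])
    show "\<And>x y. x \<le> y \<Longrightarrow> ?f y \<le> ?f x" by (rule Fw_anti) auto
    show "\<And>x y. x \<le> y \<Longrightarrow> ?f x \<le> ?f y + 1 * (y - x)" using Fw_lip[of "\<lambda>_. 1"] by simp
    show "\<And>x y. x < y \<Longrightarrow> 0 < ?f y \<Longrightarrow> ?f y < ?f x" by (rule Fw_strict) auto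
    obtain a where "c < ?f a" using Fw_big[of "\<lambda>_. 1" c] by (auto simp: prob_space)
    then show "\<exists>a. c \<le> ?f a" by (intro exI[of _ a]) simp
    obtain b where "?f b < c" using Fw_small[of "\<lambda>_. 1" c] c by auto
    then show "\<exists>b. ?f b \<le> c" by (intro exI[of _ b]) simp
  qed (use c in auto)
  have "sigF M c = (THE s. ?f s = c)" unfolding sigF_def F1_eq ..
  with theI'[OF ex] show ?thesis unfolding F1_eq by simp
qed

lemma sigFc_root:
  assumes c: "0 < c" and P: "0 < Pt t"
  shows "cond_exp M t (\<lambda>v. max 0 (v - sigFc M c t)) = c"
proof -
  let ?g = "Fw (indicator {t})"
  let ?f = "\<lambda>s. ?g s / Pt t"
  have ex: "\<exists>!s. ?f s = c"
  proof (rule root_unique[where L="1 / Pt t"])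
    show "\<And>x y. x \<le> y \<Longrightarrow> ?f y \<le> ?f x"
      by (intro divide_right_mono Fwi_anti Pt_nonneg)
    show "?f x \<le> ?f y + 1 / Pt t * (y - x)" if "x \<le> y" for x y
    proof -
      have "?g x \<le> ?g y + (y - x)" using Fwi_lip[OF that] .
      then have "?g x / Pt t \<le> (?g y + (y - x)) / Pt t" using P by (intro divide_right_mono) auto
      then show ?thesis by (simp add: add_divide_distrib)
    qed
    show "?f y < ?f x" if "x < y" "0 < ?f y" for x y
    proof -
      have "0 < ?g y" using that(2) P by (simp add: zero_less_divide_iff)
      then have "?g y < ?g x" using Fwi_strict[OF that(1)] by simp
      then show ?thesis using P by (intro divide_strict_right_mono) auto
    qed
    obtain a where "c * Pt t < ?g a" using Fwi_big[OF P, of "c * Pt t"] by auto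
    then show "\<exists>a. c \<le> ?f a" using P by (intro exI[of _ a]) (simp add: pos_le_divide_eq)
    obtain b where "?g b < c * Pt t" using Fwi_small[of "c * Pt t" t] c P by auto
    then show "\<exists>b. ?f b \<le> c" using P by (intro exI[of _ b]) (simp add: pos_divide_le_eq)
  qed (use c P in auto)
  have "sigFc M c t = (THE s. ?f s = c)" unfolding sigFc_def ce_eq ..
  with theI'[OF ex] show ?thesis unfolding ce_eq by simp
qed

definition G :: "real \<Rightarrow> real \<Rightarrow> real" where
  "G cf s = (\<integral>x. max 0 (- cf + cond_exp M (fst x) (\<lambda>v. max 0 (v - s))) \<partial>M)"

lemma G_sum: "G cf s = (\<Sum>t\<in>UNIV. max 0 (- cf + cond_exp M t (\<lambda>v. max 0 (v - s))) * Pt t)"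
  unfolding G_def by (rule int_fst(2))

lemma G_anti: "x \<le> y \<Longrightarrow> G cf y \<le> G cf x"
  unfolding G_sum
  by (intro sum_mono mult_right_mono Pt_nonneg max.mono order.refl add_left_mono ce_anti)

lemma sigP_root:
  assumes cf: "0 < cf" and cp: "0 < cp"
  shows "G cf (sigP M cf cp) = cp"
proof -
  define ce where "ce t s = Fw (indicator {t}) s / Pt t" for t s
  define tm where "tm t s = max 0 (- cf + ce t s) * Pt t" for t s
  have Gs: "G cf s = (\<Sum>t\<in>UNIV. tm t s)" for s
    unfolding G_sum tm_def ce_def ce_eq ..
  have ce_anti': "x \<le> y \<Longrightarrow> ce t y \<le> ce t x" for t x y
    unfolding ce_def by (intro divide_right_mono Fwi_anti Pt_nonneg)
  have ex: "\<exists>!s. G cf s = cp"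
  proof (rule root_unique[where L="real (card (UNIV :: 't set))"])
    show "\<And>x y. x \<le> y \<Longrightarrow> G cf y \<le> G cf x" by (rule G_anti)
    show "G cf x \<le> G cf y + real (card (UNIV :: 't set)) * (y - x)" if xy: "x \<le> y" for x y
    proof -
      have "tm t x \<le> tm t y + (y - x)" for t
      proof (cases "Pt t = 0")
        case True then show ?thesis using xy by (simp add: tm_def)
      next
        case False
        then have P: "0 < Pt t" using Pt_nonneg[of t] by simp
        have "tm t x - tm t y \<le> (ce t x - ce t y) * Pt t"
        proof -
          have "max 0 (- cf + ce t x) - max 0 (- cf + ce t y) \<le> ce t x - ce t y"
            using ce_anti'[OF xy, of t] by auto
          then show ?thesis unfolding tm_def using P
            by (metis left_diff_distrib mult_right_mono order_less_imp_le)
        qed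
        also have "\<dots> = Fw (indicator {t}) x - Fw (indicator {t}) y"
          using P unfolding ce_def by (simp add: field_simps)
        also have "\<dots> \<le> y - x" using Fwi_lip[OF xy, of t] by simp
        finally show ?thesis by simp
      qed
      then have "(\<Sum>t\<in>UNIV. tm t x) \<le> (\<Sum>t\<in>UNIV. tm t y + (y - x))" by (intro sum_mono)
      then show ?thesis unfolding Gs by (simp add: sum.distrib)
    qed
    show "G cf y < G cf x" if xy: "x < y" and pos: "0 < G cf y" for x y
    proof -
      have "\<exists>t\<in>UNIV. 0 < tm t y"
      proof (rule ccontr)
        assume "\<not> ?thesis"
        then have "(\<Sum>t\<in>UNIV. tm t y) \<le> 0" by (intro sum_nonpos) (auto simp: not_less)
        then show False using pos Gs by simp
      qed
      then obtain t0 where t0: "0 < tm t0 y" by blast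
      then have P: "0 < Pt t0" and h: "0 < - cf + ce t0 y"
        unfolding tm_def using Pt_nonneg[of t0] by (auto simp: zero_less_mult_iff)
      then have "0 < ce t0 y" using cf by simp
      then have "0 < Fw (indicator {t0}) y" using P unfolding ce_def by (simp add: zero_less_divide_iff)
      then have "Fw (indicator {t0}) y < Fw (indicator {t0}) x" by (rule Fwi_strict[OF xy])
      then have "ce t0 y < ce t0 x" using P unfolding ce_def by (intro divide_strict_right_mono)
      then have "tm t0 y < tm t0 x" using P h unfolding tm_def by (intro mult_strict_right_mono) auto
      moreover have "\<forall>t\<in>UNIV. tm t y \<le> tm t x"
      proof
        fix t :: 't
        have "ce t y \<le> ce t x" using xy by (intro ce_anti') simp
        then show "tm t y \<le> tm t x" unfolding tm_def by (intro mult_right_mono Pt_nonneg) auto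
      qed
      ultimately have "(\<Sum>t\<in>UNIV. tm t y) < (\<Sum>t\<in>UNIV. tm t x)"
        by (intro sum_strict_mono_ex1) auto
      then show ?thesis unfolding Gs .
    qed
    obtain t0 where P: "0 < Pt t0"
    proof -
      have "\<exists>t. 0 < Pt t"
      proof (rule ccontr)
        assume "\<not> ?thesis"
        then have "(\<Sum>t\<in>UNIV. Pt t) \<le> 0" by (intro sum_nonpos) (auto simp: not_less)
        then show False using sum_Pt by simp
      qed
      then show ?thesis using that by blast
    qed
    obtain a where a: "cf + cp < Fw (indicator {t0}) a"
      using Fwi_big[OF P, of "cf + cp"] by auto
    have "tm t0 a \<ge> (- cf + ce t0 a) * Pt t0" unfolding tm_def using P by (intro mult_right_mono) auto
    moreover have "(- cf + ce t0 a) * Pt t0 = - cf * Pt t0 + Fw (indicator {t0}) a"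
      using P unfolding ce_def by (simp add: field_simps)
    moreover have "- cf * Pt t0 \<ge> - cf" using cf Pt_le1[of t0] by simp
    ultimately have "tm t0 a \<ge> cp" using a by linarith
    moreover have "tm t0 a \<le> (\<Sum>t\<in>UNIV. tm t a)"
      by (rule member_le_sum) (auto simp: tm_def intro!: mult_nonneg_nonneg Pt_nonneg)
    ultimately show "\<exists>a. cp \<le> G cf a" unfolding Gs by (intro exI[of _ a]) linarith
    define K where "K = real (card (UNIV :: 't set))"
    have K: "0 < K" unfolding K_def by (simp add: finite_UNIV_card_ge_0)
    obtain b where b: "Fw (\<lambda>_. 1) b < cp / K" using Fw_small[of "\<lambda>_. 1" "cp / K"] cp K by auto
    have "tm t b \<le> Fw (\<lambda>_. 1) b" for t
    proof -
      have "tm t b \<le> Fw (indicator {t}) b"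
      proof (cases "Pt t = 0")
        case True then show ?thesis by (simp add: tm_def Fwi_nonneg)
      next
        case False
        then have P: "0 < Pt t" using Pt_nonneg[of t] by simp
        have "tm t b \<le> max 0 (ce t b) * Pt t" unfolding tm_def using cf P
          by (intro mult_right_mono) auto
        also have "\<dots> = Fw (indicator {t}) b" using P Fwi_nonneg[of t b]
          unfolding ce_def by (simp add: max_def)
        finally show ?thesis .
      qed
      also have "\<dots> \<le> Fw (\<lambda>_. 1) b"
        unfolding Fw_def
      proof (rule integral_mono)
        show "integrable M (\<lambda>x. 1 * max 0 (snd x - b))" using F1_int by simp
        show "integrable M (\<lambda>x. indicator {t} (fst x) * max 0 (snd x - b))"
          by (rule Fw_int) (auto simp: indicator_def)
        fix x :: "'t \<times> real"
        show "indicator {t} (fst x) * max 0 (snd x - b) \<le> 1 * max 0 (snd x - b)"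
          by (intro mult_right_mono ind_w1) auto
      qed
      finally show ?thesis .
    qed
    then have "(\<Sum>t\<in>UNIV. tm t b) \<le> (\<Sum>t\<in>(UNIV::'t set). Fw (\<lambda>_. 1) b)" by (intro sum_mono)
    also have "\<dots> = K * Fw (\<lambda>_. 1) b" unfolding K_def by simp
    also have "\<dots> < cp" using b K by (simp add: pos_less_divide_eq mult.commute)
    finally show "\<exists>b. G cf b \<le> cp" unfolding Gs by (intro exI[of _ b]) simp
  qed (use cp in auto)
  have "sigP M cf cp = (THE s. G cf s = cp)" unfolding sigP_def G_def ..
  with theI'[OF ex] show ?thesis by simp
qed

end

context pbox begin

lemma int_ind_lin:
  fixes g :: "real \<Rightarrow> real"
  assumes g: "g \<in> borel_measurable borel" and b: "\<And>v. \<bar>g v\<bar> \<le> a + c * \<bar>v\<bar>" "0 \<le> c"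
  shows "integrable M (\<lambda>x. indicator {t} (fst x) * g (snd x))"
proof (rule int_lin[where a=a and b=c])
  show "(\<lambda>x. indicator {t} (fst x) * g (snd x)) \<in> borel_measurable M"
    by (intro borel_measurable_times fstfun_meas sndfun_meas g)
  fix x :: "'t \<times> real"
  show "\<bar>indicator {t} (fst x) * g (snd x)\<bar> \<le> a + c * \<bar>snd x\<bar>"
    using b(1)[of "snd x"] b(2) by (auto simp: indicator_def abs_mult intro: order_trans)
qed (use b in simp)

lemma int_snd_lin:
  fixes g :: "real \<Rightarrow> real"
  assumes g: "g \<in> borel_measurable borel" and b: "\<And>v. \<bar>g v\<bar> \<le> a + c * \<bar>v\<bar>" "0 \<le> c"
  shows "integrable M (\<lambda>x. g (snd x))"
  by (rule int_lin[where a=a and b=c]) (use b in \<open>auto intro: sndfun_meas g\<close>)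

lemma I_const_add:
  fixes g :: "real \<Rightarrow> real"
  assumes "integrable M (\<lambda>x. indicator {t} (fst x) * g (snd x))"
  shows "(\<integral>x. indicator {t} (fst x) * (c + g (snd x)) \<partial>M) = c * Pt t + (\<integral>x. indicator {t} (fst x) * g (snd x) \<partial>M)"
proof -
  have "(\<integral>x. indicator {t} (fst x) * (c + g (snd x)) \<partial>M)
      = (\<integral>x. c * indicator {t} (fst x) + indicator {t} (fst x) * g (snd x) \<partial>M)"
    by (simp add: algebra_simps)
  also have "\<dots> = c * (\<integral>x. indicator {t} (fst x) \<partial>M) + (\<integral>x. indicator {t} (fst x) * g (snd x) \<partial>M)"
    using assms int_fst(1)[of "indicator {t}"]
    by (subst Bochner_Integration.integral_add) auto
  finally show ?thesis by (simp add: int_ind)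
qed

end

lemma best_fin: fixes s :: "nat \<Rightarrow> 't bstate" shows "finite {v. \<exists>j<N. s j = Full v}"
proof (rule finite_subset)
  show "{v. \<exists>j<N. s j = Full v} \<subseteq> (\<lambda>j. case s j of Full v \<Rightarrow> v | _ \<Rightarrow> 0) ` {..<N}"
    by (auto intro!: image_eqI)
qed (rule finite_imageI, simp)

lemma best_nonneg: fixes s :: "nat \<Rightarrow> 't bstate" shows "0 \<le> best N s"
  unfolding best_def by (rule Max_ge) (auto simp: best_fin)

lemma best_ge: fixes s :: "nat \<Rightarrow> 't bstate" shows "j < N \<Longrightarrow> s j = Full v \<Longrightarrow> v \<le> best N s"
  unfolding best_def by (rule Max_ge) (auto simp: best_fin)

lemma best_upd_full:
  fixes s :: "nat \<Rightarrow> 't bstate"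
  assumes "j < N" "\<forall>v. s j \<noteq> Full v"
  shows "best N (s(j := Full v)) = max (best N s) v"
proof -
  have "{w. \<exists>k<N. (s(j := Full v)) k = Full w} = insert v {w. \<exists>k<N. s k = Full w}"
    using assms by (auto split: if_splits)
  then have "best N (s(j := Full v)) = Max (insert v (insert 0 {w. \<exists>k<N. s k = Full w}))"
    unfolding best_def by (simp add: insert_commute)
  also have "\<dots> = max v (best N s)" unfolding best_def
    by (subst Max_insert) (auto simp: best_fin)
  finally show ?thesis by simp
qed

lemma best_upd_nonfull:
  fixes s :: "nat \<Rightarrow> 't bstate"
  assumes "\<forall>v. s j \<noteq> Full v" "\<forall>v. b \<noteq> Full v"
  shows "best N (s(j := b)) = best N s"
proof -
  have "{w. \<exists>k<N. (s(j := b)) k = Full w} = {w. \<exists>k<N. s k = Full w}"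
    using assms by (auto split: if_splits)
  then show ?thesis unfolding best_def by simp
qed

lemma best_init: "best N (\<lambda>_. Closed) = 0"
  unfolding best_def by simp

locale pandora =
  fixes N :: nat and D :: "nat \<Rightarrow> ('t::finite \<times> real) measure" and cF cP :: "nat \<Rightarrow> real"
  assumes pb: "\<And>j. j < N \<Longrightarrow> pbox (D j)"
    and cFpos: "\<And>j. j < N \<Longrightarrow> 0 < cF j" and cPpos: "\<And>j. j < N \<Longrightarrow> 0 < cP j"
begin

definition sterm :: "(nat \<Rightarrow> 't bstate) \<Rightarrow> real \<Rightarrow> nat \<Rightarrow> real" where
  "sterm s X j = (case s j of Part t \<Rightarrow> max 0 (- cF j + cond_exp (D j) t (\<lambda>v. max 0 (v - X))) | _ \<Rightarrow> 0)"

definition S :: "(nat \<Rightarrow> 't bstate) \<Rightarrow> real \<Rightarrow> real" where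
  "S s X = (\<Sum>j<N. sterm s X j)"

lemma sterm_nonneg: "0 \<le> sterm s X j"
  unfolding sterm_def by (auto split: bstate.split)

lemma S_nonneg: "0 \<le> S s X"
  unfolding S_def by (intro sum_nonneg sterm_nonneg)

lemma S_anti: "X \<le> Y \<Longrightarrow> S s Y \<le> S s X"
  unfolding S_def
proof (intro sum_mono)
  fix j assume XY: "X \<le> Y" and j: "j \<in> {..<N}"
  interpret P: pbox "D j" using pb j by simp
  show "sterm s Y j \<le> sterm s X j"
  proof (cases "s j")
    case (Part t)
    then show ?thesis using P.ce_anti[OF XY, of t] by (auto simp: sterm_def max_def)
  qed (auto simp: sterm_def)
qed

lemma S_upd:
  assumes j: "j < N"
  shows "S (s(j := b)) X = S s X - sterm s X j + sterm (s(j := b)) X j"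
proof -
  have "S s X = sterm s X j + (\<Sum>k\<in>{..<N} - {j}. sterm s X k)"
    unfolding S_def using j by (subst sum.remove) auto
  moreover have "S (s(j := b)) X = sterm (s(j := b)) X j + (\<Sum>k\<in>{..<N} - {j}. sterm (s(j := b)) X k)"
    unfolding S_def using j by (subst sum.remove) auto
  moreover have "(\<Sum>k\<in>{..<N} - {j}. sterm (s(j := b)) X k) = (\<Sum>k\<in>{..<N} - {j}. sterm s X k)"
    by (intro sum.cong) (auto simp: sterm_def)
  ultimately show ?thesis by simp
qed

lemma sterm_closed: "s j = Closed \<Longrightarrow> sterm s X j = 0"
  and sterm_full: "s j = Full v \<Longrightarrow> sterm s X j = 0"
  and sterm_part: "s j = Part t \<Longrightarrow> sterm s X j = max 0 (- cF j + cond_exp (D j) t (\<lambda>v. max 0 (v - X)))"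
  by (simp_all add: sterm_def)

lemma opt_bound:
  assumes "best N s \<le> X"
    and "\<And>j. j < N \<Longrightarrow> s j = Closed \<Longrightarrow> sigF (D j) (cF j) \<le> X \<and> sigP (D j) (cF j) (cP j) \<le> X"
  shows "optf N D cF cP n s \<le> X + S s X"
  using assms
proof (induction n arbitrary: s X)
  case 0
  then show ?case using S_nonneg[of s X] by simp
next
  case (Suc n)
  have X0: "0 \<le> X" using best_nonneg[of N s] Suc.prems(1) by linarith
  have S0: "0 \<le> S s X" by (rule S_nonneg)
  let ?U = "(\<Union>j\<in>{..<N}. (case s j of
      Closed \<Rightarrow> {- cF j + (\<integral>x. optf N D cF cP n (s(j := Full (snd x))) \<partial>D j),
                 - cP j + (\<integral>x. optf N D cF cP n (s(j := Part (fst x))) \<partial>D j)}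
    | Part t \<Rightarrow> {- cF j + cond_exp (D j) t (\<lambda>v. optf N D cF cP n (s(j := Full v)))}
    | Full v \<Rightarrow> {}))"
  have fin: "finite ?U"
    by (intro finite_UN_I) (auto split: bstate.split)
  have bnd: "y \<le> X + S s X" if y: "y \<in> ?U" for y
  proof -
    from y obtain j where j: "j < N" and yj: "y \<in> (case s j of
      Closed \<Rightarrow> {- cF j + (\<integral>x. optf N D cF cP n (s(j := Full (snd x))) \<partial>D j),
                 - cP j + (\<integral>x. optf N D cF cP n (s(j := Part (fst x))) \<partial>D j)}
    | Part t \<Rightarrow> {- cF j + cond_exp (D j) t (\<lambda>v. optf N D cF cP n (s(j := Full v)))}
    | Full v \<Rightarrow> {})" by auto
    interpret P: pbox "D j" using pb j by simp
    have cF: "0 < cF j" and cP: "0 < cP j" using cFpos cPpos j by auto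
    show ?thesis
    proof (cases "s j")
      case Closed
      have fullb: "optf N D cF cP n (s(j := Full v)) \<le> X + S s X + max 0 (v - X)" for v
      proof -
        have "optf N D cF cP n (s(j := Full v)) \<le> max X v + S (s(j := Full v)) (max X v)"
        proof (rule Suc.IH)
          show "best N (s(j := Full v)) \<le> max X v"
            using best_upd_full[of j N s v] j Closed Suc.prems(1) by auto
          show "sigF (D k) (cF k) \<le> max X v \<and> sigP (D k) (cF k) (cP k) \<le> max X v"
            if "k < N" "(s(j := Full v)) k = Closed" for k
            using Suc.prems(2)[of k] that by (auto split: if_splits)
        qed
        moreover have "S (s(j := Full v)) (max X v) \<le> S (s(j := Full v)) X" by (rule S_anti) simp
        moreover have "S (s(j := Full v)) X = S s X"
          using S_upd[OF j, of s "Full v" X] Closed by (simp add: sterm_def)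
        ultimately have "optf N D cF cP n (s(j := Full v)) \<le> max X v + S s X" by linarith
        moreover have "max X v = X + max 0 (v - X)" by auto
        ultimately show ?thesis by linarith
      qed
      have Fb: "(\<integral>x. max 0 (snd x - X) \<partial>D j) \<le> cF j"
      proof -
        have "sigF (D j) (cF j) \<le> X" using Suc.prems(2)[OF j Closed] by simp
        then have "(\<integral>x. max 0 (snd x - X) \<partial>D j) \<le> (\<integral>x. max 0 (snd x - sigF (D j) (cF j)) \<partial>D j)"
          by (rule P.F1_anti)
        then show ?thesis using P.sigF_root[OF cF] by simp
      qed
      have partb: "optf N D cF cP n (s(j := Part t)) \<le> X + S s X + max 0 (- cF j + cond_exp (D j) t (\<lambda>v. max 0 (v - X)))" for t
      proof -
        have "optf N D cF cP n (s(j := Part t)) \<le> X + S (s(j := Part t)) X"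
        proof (rule Suc.IH)
          show "best N (s(j := Part t)) \<le> X"
            using best_upd_nonfull[of s j "Part t" N] Closed Suc.prems(1) by auto
          show "sigF (D k) (cF k) \<le> X \<and> sigP (D k) (cF k) (cP k) \<le> X"
            if "k < N" "(s(j := Part t)) k = Closed" for k
            using Suc.prems(2)[of k] that by (auto split: if_splits)
        qed
        moreover have "S (s(j := Part t)) X = S s X + max 0 (- cF j + cond_exp (D j) t (\<lambda>v. max 0 (v - X)))"
          using S_upd[OF j, of s "Part t" X] Closed by (simp add: sterm_def)
        ultimately show ?thesis by linarith
      qed
      have Gb: "P.G (cF j) X \<le> cP j"
      proof -
        have "sigP (D j) (cF j) (cP j) \<le> X" using Suc.prems(2)[OF j Closed] by simp
        then have "P.G (cF j) X \<le> P.G (cF j) (sigP (D j) (cF j) (cP j))" by (rule P.G_anti)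
        then show ?thesis using P.sigP_root[OF cF cP] by simp
      qed
      from yj Closed consider
        "y = - cF j + (\<integral>x. optf N D cF cP n (s(j := Full (snd x))) \<partial>D j)"
      | "y = - cP j + (\<integral>x. optf N D cF cP n (s(j := Part (fst x))) \<partial>D j)" by auto
      then show ?thesis
      proof cases
        case 1
        show ?thesis
        proof (cases "integrable (D j) (\<lambda>x. optf N D cF cP n (s(j := Full (snd x))))")
          case True
          have "(\<integral>x. optf N D cF cP n (s(j := Full (snd x))) \<partial>D j) \<le> (\<integral>x. X + S s X + max 0 (snd x - X) \<partial>D j)"
            by (intro integral_mono True fullb Bochner_Integration.integrable_add P.F1_int P.integrable_const)
          also have "\<dots> = X + S s X + (\<integral>x. max 0 (snd x - X) \<partial>D j)"
            using P.F1_int by (subst Bochner_Integration.integral_add) (auto simp: P.prob_space)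
          finally show ?thesis using 1 Fb by linarith
        next
          case False
          then show ?thesis using 1 X0 S0 cF by (simp add: not_integrable_integral_eq)
        qed
      next
        case 2
        have "(\<integral>x. optf N D cF cP n (s(j := Part (fst x))) \<partial>D j)
            \<le> (\<integral>x. X + S s X + max 0 (- cF j + cond_exp (D j) (fst x) (\<lambda>v. max 0 (v - X))) \<partial>D j)"
        proof (rule integral_mono)
          show "integrable (D j) (\<lambda>x. optf N D cF cP n (s(j := Part (fst x))))"
            using P.int_fst(1)[of "\<lambda>t. optf N D cF cP n (s(j := Part t))"] by simp
          show "integrable (D j) (\<lambda>x. X + S s X + max 0 (- cF j + cond_exp (D j) (fst x) (\<lambda>v. max 0 (v - X))))"
            using P.int_fst(1)[of "\<lambda>t. X + S s X + max 0 (- cF j + cond_exp (D j) t (\<lambda>v. max 0 (v - X)))"] by simp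
        qed (rule partb)
        also have "\<dots> = X + S s X + P.G (cF j) X"
          unfolding P.G_def
          using P.int_fst(1)[of "\<lambda>t. max 0 (- cF j + cond_exp (D j) t (\<lambda>v. max 0 (v - X)))"]
          by (subst Bochner_Integration.integral_add) (auto simp: P.prob_space)
        finally show ?thesis using 2 Gb by linarith
      qed
    next
      case (Part t)
      then have y: "y = - cF j + cond_exp (D j) t (\<lambda>v. optf N D cF cP n (s(j := Full v)))" using yj by simp
      define R where "R = S s X - sterm s X j"
      have R: "R + max 0 (- cF j + cond_exp (D j) t (\<lambda>v. max 0 (v - X))) = S s X"
        unfolding R_def using Part by (simp add: sterm_def)
      have fullb: "optf N D cF cP n (s(j := Full v)) \<le> X + R + max 0 (v - X)" for v
      proof -
        have "optf N D cF cP n (s(j := Full v)) \<le> max X v + S (s(j := Full v)) (max X v)"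
        proof (rule Suc.IH)
          show "best N (s(j := Full v)) \<le> max X v"
            using best_upd_full[of j N s v] j Part Suc.prems(1) by auto
          show "sigF (D k) (cF k) \<le> max X v \<and> sigP (D k) (cF k) (cP k) \<le> max X v"
            if "k < N" "(s(j := Full v)) k = Closed" for k
            using Suc.prems(2)[of k] that by (auto split: if_splits)
        qed
        moreover have "S (s(j := Full v)) (max X v) \<le> S (s(j := Full v)) X" by (rule S_anti) simp
        moreover have "S (s(j := Full v)) X = R"
          using S_upd[OF j, of s "Full v" X] unfolding R_def by (simp add: sterm_def)
        ultimately have "optf N D cF cP n (s(j := Full v)) \<le> max X v + R" by linarith
        moreover have "max X v = X + max 0 (v - X)" by auto
        ultimately show ?thesis by linarith
      qed
      show ?thesis
      proof (cases "P.Pt t = 0 \<or> \<not> integrable (D j) (\<lambda>x. indicator {t} (fst x) * optf N D cF cP n (s(j := Full (snd x))))")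
        case True
        then have "cond_exp (D j) t (\<lambda>v. optf N D cF cP n (s(j := Full v))) = 0"
        proof
          assume "P.Pt t = 0" then show ?thesis by (rule P.ce_Pt0)
        next
          assume "\<not> integrable (D j) (\<lambda>x. indicator {t} (fst x) * optf N D cF cP n (s(j := Full (snd x))))"
          then show ?thesis by (rule P.ce_nonint)
        qed
        then show ?thesis using y X0 S0 cF by simp
      next
        case False
        then have Pt: "0 < P.Pt t" and int: "integrable (D j) (\<lambda>x. indicator {t} (fst x) * optf N D cF cP n (s(j := Full (snd x))))"
          using P.Pt_nonneg[of t] by auto
        have im: "integrable (D j) (\<lambda>x. indicator {t} (fst x) * max 0 (snd x - X))"
          by (rule P.int_ind_lin[where a="\<bar>X\<bar>" and c=1]) auto
        have "P.Pt t * cond_exp (D j) t (\<lambda>v. optf N D cF cP n (s(j := Full v)))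
            = (\<integral>x. indicator {t} (fst x) * optf N D cF cP n (s(j := Full (snd x))) \<partial>D j)"
          by (rule P.Pt_ce)
        also have "\<dots> \<le> (\<integral>x. indicator {t} (fst x) * (X + R + max 0 (snd x - X)) \<partial>D j)"
        proof (rule integral_mono[OF int])
          show "integrable (D j) (\<lambda>x. indicator {t} (fst x) * (X + R + max 0 (snd x - X)))"
            by (rule P.int_ind_lin[where a="\<bar>X + R\<bar> + \<bar>X\<bar>" and c=1]) auto
          show "indicator {t} (fst x) * optf N D cF cP n (s(j := Full (snd x))) \<le> indicator {t} (fst x) * (X + R + max 0 (snd x - X))" for x
            using fullb by (intro mult_left_mono) (auto simp: indicator_def)
        qed
        also have "\<dots> = (X + R) * P.Pt t + P.Pt t * cond_exp (D j) t (\<lambda>v. max 0 (v - X))"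
          using P.I_const_add[OF im, of "X + R"] P.Pt_ce[of t "\<lambda>v. max 0 (v - X)"] by simp
        finally have "P.Pt t * cond_exp (D j) t (\<lambda>v. optf N D cF cP n (s(j := Full v)))
            \<le> P.Pt t * (X + R + cond_exp (D j) t (\<lambda>v. max 0 (v - X)))" by (simp add: algebra_simps)
        then have "cond_exp (D j) t (\<lambda>v. optf N D cF cP n (s(j := Full v))) \<le> X + R + cond_exp (D j) t (\<lambda>v. max 0 (v - X))"
          using Pt by simp
        then show ?thesis using y R by linarith
      qed
    next
      case (Full v)
      then show ?thesis using yj by simp
    qed
  qed
  show ?case
    unfolding optf.simps
    by (rule Max.boundedI) (use fin bnd Suc.prems(1) S0 in auto)
qed

end

primrec W1 :: "('t \<times> real) measure \<Rightarrow> real \<Rightarrow> real \<Rightarrow> nat \<Rightarrow> real \<Rightarrow> real" where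
  "W1 M c \<sigma> 0 b = b"
| "W1 M c \<sigma> (Suc m) b = (if \<sigma> \<le> b then b else - c + (\<integral>x. W1 M c \<sigma> m (max b (snd x)) \<partial>M))"

definition phi :: "real \<Rightarrow> real \<Rightarrow> nat \<Rightarrow> real \<Rightarrow> real" where
  "phi \<sigma> u m b = (if \<sigma> \<le> b then b else b + (\<sigma> - b) * (1 - (1 - u) ^ m))"

lemma phi_ge: assumes "0 \<le> u" "u \<le> 1" shows "b \<le> phi \<sigma> u m b"
proof -
  have "(1 - u) ^ m \<le> 1" using assms by (intro power_le_one) auto
  then show ?thesis unfolding phi_def by (auto intro!: mult_nonneg_nonneg)
qed

lemma phi_step1:
  assumes b: "b < \<sigma>"
  shows "(b + (\<sigma> - b) * (1 - (1 - u) ^ m)) + (\<sigma> - (b + (\<sigma> - b) * (1 - (1 - u) ^ m))) * u = phi \<sigma> u (Suc m) b"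
  using b unfolding phi_def by (simp add: algebra_simps)

lemma phi_step2:
  fixes m :: nat
  assumes b: "b < \<sigma>" and u: "0 \<le> u" "u \<le> 1" and ba: "b \<le> a"
  defines "K \<equiv> b + (\<sigma> - b) * (1 - (1 - u) ^ m)"
  shows "phi \<sigma> u m a \<ge> max 0 (a - \<sigma>) + K + (\<sigma> - K) * indicator {\<sigma><..} a"
proof -
  define r where "r = 1 - (1 - u) ^ m"
  have r: "0 \<le> r" "r \<le> 1" unfolding r_def using u by (auto intro!: power_le_one)
  have K: "K = b + (\<sigma> - b) * r" unfolding K_def r_def ..
  show ?thesis
  proof (cases "\<sigma> < a")
    case True
    then show ?thesis unfolding phi_def by (simp add: indicator_def)
  next
    case False
    have "(\<sigma> - b) * r \<le> (\<sigma> - b)" using b r by (intro mult_right_le_one_le) auto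
    then have "K \<le> \<sigma>" unfolding K by linarith
    moreover have "K \<le> a + (\<sigma> - a) * r" if "a < \<sigma>"
    proof -
      have "a + (\<sigma> - a) * r = K + (a - b) * (1 - r)" unfolding K by (simp add: algebra_simps)
      moreover have "0 \<le> (a - b) * (1 - r)" using ba r by simp
      ultimately show ?thesis by linarith
    qed
    ultimately show ?thesis using False unfolding phi_def r_def[symmetric]
      by (auto simp: indicator_def)
  qed
qed

lemma abs_sandwich: "(lo::real) \<le> x \<Longrightarrow> x \<le> hi \<Longrightarrow> \<bar>x\<bar> \<le> \<bar>lo\<bar> + \<bar>hi\<bar>"
  by linarith

lemma abs_max_le: "\<bar>max (a::real) b\<bar> \<le> \<bar>a\<bar> + \<bar>b\<bar>"
  by (simp add: max_def)

context pbox begin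

lemma set_gt: "{x. s < snd x} \<in> sets M"
proof -
  have "{x \<in> space M. s < snd x} \<in> sets M" by measurable
  then show ?thesis by (simp add: space_eq)
qed

lemma W1_props:
  assumes c: "(\<integral>x. max 0 (snd x - \<sigma>) \<partial>M) = c" and u: "u = measure M {x. \<sigma> < snd x}"
  shows "mono (W1 M c \<sigma> m) \<and> (\<forall>b. W1 M c \<sigma> m b \<le> max b \<sigma>) \<and> (\<forall>b. phi \<sigma> u m b \<le> W1 M c \<sigma> m b)"
proof (induction m)
  case 0
  then show ?case by (simp add: mono_def phi_def)
next
  case (Suc m)
  let ?W = "W1 M c \<sigma> m"
  have u01: "0 \<le> u" "u \<le> 1" unfolding u by auto
  have monoW: "mono ?W" and upW: "\<And>b. ?W b \<le> max b \<sigma>" and loW: "\<And>b. phi \<sigma> u m b \<le> ?W b"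
    using Suc.IH by auto
  have geW: "b \<le> ?W b" for b using phi_ge[OF u01, of b \<sigma> m] loW[of b] by linarith
  have measW: "?W \<in> borel_measurable borel" using monoW by (rule borel_measurable_mono)
  have intW: "integrable M (\<lambda>x. ?W (max b (snd x)))" for b
  proof (rule int_snd_lin[where a="2 * \<bar>b\<bar> + \<bar>\<sigma>\<bar>" and c=2])
    show "(\<lambda>v. ?W (max b v)) \<in> borel_measurable borel"
      by (rule measurable_compose[OF _ measW]) simp
    fix v :: real
    show "\<bar>?W (max b v)\<bar> \<le> 2 * \<bar>b\<bar> + \<bar>\<sigma>\<bar> + 2 * \<bar>v\<bar>"
      using abs_sandwich[OF geW[of "max b v"] upW[of "max b v"]] abs_max_le[of b v] abs_max_le[of "max b v" \<sigma>]
      by linarith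
  qed simp
  have step: "W1 M c \<sigma> (Suc m) b = - c + (\<integral>x. ?W (max b (snd x)) \<partial>M)" if "b < \<sigma>" for b
    using that by simp
  have up: "W1 M c \<sigma> (Suc m) b \<le> max b \<sigma>" for b
  proof (cases "\<sigma> \<le> b")
    case True then show ?thesis by simp
  next
    case False
    have "(\<integral>x. ?W (max b (snd x)) \<partial>M) \<le> (\<integral>x. \<sigma> + max 0 (snd x - \<sigma>) \<partial>M)"
    proof (rule integral_mono[OF intW])
      show "integrable M (\<lambda>x. \<sigma> + max 0 (snd x - \<sigma>))"
        by (intro Bochner_Integration.integrable_add F1_int) simp
      fix x :: "'t \<times> real"
      have "max (max b (snd x)) \<sigma> = \<sigma> + max 0 (snd x - \<sigma>)" using False by (auto simp: max_def)
      then show "?W (max b (snd x)) \<le> \<sigma> + max 0 (snd x - \<sigma>)"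
        using upW[of "max b (snd x)"] by linarith
    qed
    also have "\<dots> = \<sigma> + c" using c F1_int
      by (subst Bochner_Integration.integral_add) (auto simp: prob_space)
    finally show ?thesis using False by simp
  qed
  have lo: "phi \<sigma> u (Suc m) b \<le> W1 M c \<sigma> (Suc m) b" for b
  proof (cases "\<sigma> \<le> b")
    case True then show ?thesis by (simp add: phi_def)
  next
    case False
    then have b: "b < \<sigma>" by simp
    define K where "K = b + (\<sigma> - b) * (1 - (1 - u) ^ m)"
    have ii: "integrable M (\<lambda>x. indicator {\<sigma><..} (snd x) :: real)"
      by (rule int_snd_lin[where a=1 and c=0]) (auto simp: indicator_def)
    have "(\<integral>x. max 0 (snd x - \<sigma>) + K + (\<sigma> - K) * indicator {\<sigma><..} (snd x) \<partial>M) \<le> (\<integral>x. ?W (max b (snd x)) \<partial>M)"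
    proof (rule integral_mono[OF _ intW])
      show "integrable M (\<lambda>x. max 0 (snd x - \<sigma>) + K + (\<sigma> - K) * indicator {\<sigma><..} (snd x))"
        by (intro Bochner_Integration.integrable_add F1_int integrable_mult_right ii) simp
      fix x :: "'t \<times> real"
      have e1: "max 0 (max b (snd x) - \<sigma>) = max 0 (snd x - \<sigma>)" using b by (auto simp: max_def)
      have e2: "indicator {\<sigma><..} (max b (snd x)) = (indicator {\<sigma><..} (snd x) :: real)"
        using b by (auto simp: indicator_def max_def)
      have "max 0 (snd x - \<sigma>) + K + (\<sigma> - K) * indicator {\<sigma><..} (snd x) \<le> phi \<sigma> u m (max b (snd x))"
        using phi_step2[OF b u01, of "max b (snd x)" m] unfolding K_def e1 e2 by simp
      then show "max 0 (snd x - \<sigma>) + K + (\<sigma> - K) * indicator {\<sigma><..} (snd x) \<le> ?W (max b (snd x))"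
        using loW[of "max b (snd x)"] by linarith
    qed
    moreover have "(\<integral>x. max 0 (snd x - \<sigma>) + K + (\<sigma> - K) * indicator {\<sigma><..} (snd x) \<partial>M) = c + K + (\<sigma> - K) * u"
    proof -
      have "(\<integral>x. indicator {\<sigma><..} (snd x) \<partial>M) = u"
      proof -
        have "(\<integral>x. indicator {\<sigma><..} (snd x) \<partial>M) = (\<integral>x. indicator {x. \<sigma> < snd x} x \<partial>M)"
          by (rule Bochner_Integration.integral_cong) (auto simp: indicator_def)
        also have "\<dots> = measure M {x. \<sigma> < snd x}"
          by (simp add: space_eq)
        finally show ?thesis unfolding u .
      qed
      then show ?thesis using c F1_int ii
        by (simp add: Bochner_Integration.integral_add integrable_mult_right prob_space)
    qed
    ultimately show ?thesis using step[OF b] phi_step1[OF b, of u m] unfolding K_def by linarith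
  qed
  have mono: "mono (W1 M c \<sigma> (Suc m))"
  proof (rule monoI)
    fix b1 b2 :: real assume le: "b1 \<le> b2"
    show "W1 M c \<sigma> (Suc m) b1 \<le> W1 M c \<sigma> (Suc m) b2"
    proof (cases "\<sigma> \<le> b1")
      case True then show ?thesis using le by simp
    next
      case False
      show ?thesis
      proof (cases "\<sigma> \<le> b2")
        case True
        then show ?thesis using up[of b1] False le by simp
      next
        case F2: False
        have "(\<integral>x. ?W (max b1 (snd x)) \<partial>M) \<le> (\<integral>x. ?W (max b2 (snd x)) \<partial>M)"
          by (intro integral_mono intW monoD[OF monoW]) (use le in auto)
        then show ?thesis using False F2 by simp
      qed
    qed
  qed
  show ?case using mono up lo by blast
qed

end

primrec W2 :: "('t \<times> real) measure \<Rightarrow> real \<Rightarrow> real \<Rightarrow> real \<Rightarrow> ('t \<Rightarrow> real) \<Rightarrow> nat \<Rightarrow> real \<Rightarrow> real" where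
  "W2 M cf cp \<sigma> thr 0 b = b"
| "W2 M cf cp \<sigma> thr (Suc m) b = (if \<sigma> \<le> b then b else - cp + (\<integral>x. (if \<sigma> < thr (fst x)
      then - cf + cond_exp M (fst x) (\<lambda>v. W2 M cf cp \<sigma> thr m (max b v)) else W2 M cf cp \<sigma> thr m b) \<partial>M))"

context pbox begin

lemma split_int_t:
  fixes f :: "'t \<times> real \<Rightarrow> real"
  assumes f: "integrable M f"
  shows "(\<integral>x. f x \<partial>M) = (\<Sum>t\<in>UNIV. \<integral>x. indicator {t} (fst x) * f x \<partial>M)"
proof -
  have e: "(\<Sum>t\<in>UNIV. indicator {t} (fst x) * f x) = f x" for x
  proof -
    have "(\<Sum>t\<in>UNIV. indicator {t} (fst x) * f x) = (\<Sum>t\<in>UNIV. if t = fst x then f x else 0)"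
      by (intro sum.cong) (auto simp: indicator_def)
    then show ?thesis by simp
  qed
  have i: "integrable M (\<lambda>x. indicator {t} (fst x) * f x)" for t
  proof (rule Bochner_Integration.integrable_bound[OF f])
    show "(\<lambda>x. indicator {t} (fst x) * f x) \<in> borel_measurable M"
      by (intro borel_measurable_times fstfun_meas borel_measurable_integrable f)
    show "AE x in M. norm (indicator {t} (fst x) * f x) \<le> norm (f x)"
      by (intro AE_I2) (auto simp: indicator_def)
  qed
  have "(\<integral>x. f x \<partial>M) = (\<integral>x. (\<Sum>t\<in>UNIV. indicator {t} (fst x) * f x) \<partial>M)"
    by (simp add: e)
  also have "\<dots> = (\<Sum>t\<in>UNIV. \<integral>x. indicator {t} (fst x) * f x \<partial>M)"
    by (rule Bochner_Integration.integral_sum) (rule i)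
  finally show ?thesis .
qed

lemma W2_props:
  assumes cf: "0 < cf" and cp: "G cf \<sigma> = cp"
    and thr: "\<And>t. 0 < Pt t \<Longrightarrow> cond_exp M t (\<lambda>v. max 0 (v - thr t)) = cf"
    and w: "w = measure M {x. \<sigma> < snd x \<and> \<sigma> < thr (fst x)}"
  shows "mono (W2 M cf cp \<sigma> thr m) \<and> (\<forall>b. W2 M cf cp \<sigma> thr m b \<le> max b \<sigma>)
     \<and> (\<forall>b. phi \<sigma> w m b \<le> W2 M cf cp \<sigma> thr m b)"
proof -
  define I where "I t f = (\<integral>x. indicator {t} (fst x) * f (snd x) \<partial>M)" for t and f :: "real \<Rightarrow> real"
  have w01: "0 \<le> w" "w \<le> 1" unfolding w by auto
  have iind: "integrable M (\<lambda>x. indicator {t} (fst x) * (indicator {\<sigma><..} (snd x) :: real))" for t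
    by (rule int_ind_lin[where a=1 and c=0]) (auto simp: indicator_def)
  have imax: "integrable M (\<lambda>x. indicator {t} (fst x) * max 0 (snd x - \<sigma>))" for t
    by (rule int_ind_lin[where a="\<bar>\<sigma>\<bar>" and c=1]) auto
  have cp_dec: "cp = (\<Sum>t\<in>UNIV. (if \<sigma> < thr t then - cf * Pt t + I t (\<lambda>v. max 0 (v - \<sigma>)) else 0))"
  proof -
    have "cp = (\<Sum>t\<in>UNIV. max 0 (- cf + cond_exp M t (\<lambda>v. max 0 (v - \<sigma>))) * Pt t)"
      using cp G_sum by simp
    also have "\<dots> = (\<Sum>t\<in>UNIV. (if \<sigma> < thr t then - cf * Pt t + I t (\<lambda>v. max 0 (v - \<sigma>)) else 0))"
    proof (rule sum.cong[OF refl])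
      fix t :: 't
      show "max 0 (- cf + cond_exp M t (\<lambda>v. max 0 (v - \<sigma>))) * Pt t
          = (if \<sigma> < thr t then - cf * Pt t + I t (\<lambda>v. max 0 (v - \<sigma>)) else 0)"
      proof (cases "Pt t = 0")
        case True
        then show ?thesis unfolding I_def using int_ind0[OF True, of "\<lambda>x. max 0 (snd x - \<sigma>)"] by simp
      next
        case False
        then have P: "0 < Pt t" using Pt_nonneg[of t] by simp
        have I: "I t (\<lambda>v. max 0 (v - \<sigma>)) = Pt t * cond_exp M t (\<lambda>v. max 0 (v - \<sigma>))"
          unfolding I_def by (rule Pt_ce[symmetric])
        show ?thesis
        proof (cases "\<sigma> < thr t")
          case True
          then have "cf \<le> cond_exp M t (\<lambda>v. max 0 (v - \<sigma>))"
            using ce_anti[of \<sigma> "thr t" t] thr[OF P] by simp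
          then show ?thesis using True I by (simp add: algebra_simps)
        next
          case False
          then have "cond_exp M t (\<lambda>v. max 0 (v - \<sigma>)) \<le> cf"
            using ce_anti[of "thr t" \<sigma> t] thr[OF P] by simp
          then show ?thesis using False by simp
        qed
      qed
    qed
    finally show ?thesis .
  qed
  have w_dec: "w = (\<Sum>t\<in>UNIV. (if \<sigma> < thr t then I t (indicator {\<sigma><..}) else 0))"
  proof -
    have sA: "{x. \<sigma> < snd x \<and> \<sigma> < thr (fst x)} \<in> sets M"
    proof -
      have "{x \<in> space M. \<sigma> < snd x \<and> \<sigma> < thr (fst x)} \<in> sets M"
      proof -
        have [measurable]: "(\<lambda>x. thr (fst x)) \<in> borel_measurable M" by (rule fstfun_meas)
        show ?thesis by measurable
      qed
      then show ?thesis by (simp add: space_eq)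
    qed
    have "w = (\<integral>x. indicator {x. \<sigma> < snd x \<and> \<sigma> < thr (fst x)} x \<partial>M)"
      unfolding w by (simp add: space_eq)
    also have "\<dots> = (\<Sum>t\<in>UNIV. \<integral>x. indicator {t} (fst x) * indicator {x. \<sigma> < snd x \<and> \<sigma> < thr (fst x)} x \<partial>M)"
      by (rule split_int_t) (use sA in \<open>simp add: emeasure_eq_measure\<close>)
    also have "\<dots> = (\<Sum>t\<in>UNIV. (if \<sigma> < thr t then I t (indicator {\<sigma><..}) else 0))"
    proof (rule sum.cong[OF refl])
      fix t
      show "(\<integral>x. indicator {t} (fst x) * indicator {x. \<sigma> < snd x \<and> \<sigma> < thr (fst x)} x \<partial>M)
          = (if \<sigma> < thr t then I t (indicator {\<sigma><..}) else 0)"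
      proof (cases "\<sigma> < thr t")
        case True
        then show ?thesis unfolding I_def
          by (auto simp: indicator_def intro!: Bochner_Integration.integral_cong)
      next
        case False
        then show ?thesis unfolding I_def
          by (simp, intro integral_eq_zero_AE AE_I2) (auto simp: indicator_def)
      qed
    qed
    finally show ?thesis .
  qed
  show ?thesis
  proof (induction m)
    case 0
    then show ?case by (simp add: mono_def phi_def)
  next
    case (Suc m)
    let ?W = "W2 M cf cp \<sigma> thr m"
    have monoW: "mono ?W" and upW: "\<And>b. ?W b \<le> max b \<sigma>" and loW: "\<And>b. phi \<sigma> w m b \<le> ?W b"
      using Suc.IH by auto
    have geW: "b \<le> ?W b" for b using phi_ge[OF w01, of b \<sigma> m] loW[of b] by linarith
    have measW: "?W \<in> borel_measurable borel" using monoW by (rule borel_measurable_mono)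
    have measWb: "(\<lambda>v. ?W (max b v)) \<in> borel_measurable borel" for b
      by (rule measurable_compose[OF _ measW]) simp
    have intW: "integrable M (\<lambda>x. indicator {t} (fst x) * ?W (max b (snd x)))" for b t
    proof (rule int_ind_lin[OF measWb, where a="2 * \<bar>b\<bar> + \<bar>\<sigma>\<bar>" and c=2])
      fix v :: real
      show "\<bar>?W (max b v)\<bar> \<le> 2 * \<bar>b\<bar> + \<bar>\<sigma>\<bar> + 2 * \<bar>v\<bar>"
        using abs_sandwich[OF geW[of "max b v"] upW[of "max b v"]] abs_max_le[of b v] abs_max_le[of "max b v" \<sigma>]
        by linarith
    qed simp
    define Z where "Z b t = (if \<sigma> < thr t then - cf + cond_exp M t (\<lambda>v. ?W (max b v)) else ?W b)" for b t
    have step: "W2 M cf cp \<sigma> thr (Suc m) b = - cp + (\<Sum>t\<in>UNIV. Z b t * Pt t)" if "b < \<sigma>" for b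
      using that int_fst(2)[of "Z b"] unfolding Z_def by simp
    have ZP: "Z b t * Pt t = (if \<sigma> < thr t then - cf * Pt t + I t (\<lambda>v. ?W (max b v)) else ?W b * Pt t)" for b t
      unfolding Z_def I_def using Pt_ce[of t "\<lambda>v. ?W (max b v)"] by (simp add: algebra_simps)
    have up: "W2 M cf cp \<sigma> thr (Suc m) b \<le> max b \<sigma>" for b
    proof (cases "\<sigma> \<le> b")
      case True then show ?thesis by simp
    next
      case False
      have "Z b t * Pt t \<le> (if \<sigma> < thr t then - cf * Pt t + I t (\<lambda>v. max 0 (v - \<sigma>)) else 0) + \<sigma> * Pt t" for t
      proof (cases "\<sigma> < thr t")
        case True
        have "I t (\<lambda>v. ?W (max b v)) \<le> I t (\<lambda>v. \<sigma> + max 0 (v - \<sigma>))"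
          unfolding I_def
        proof (rule integral_mono[OF intW])
          show "integrable M (\<lambda>x. indicator {t} (fst x) * (\<sigma> + max 0 (snd x - \<sigma>)))"
            by (rule int_ind_lin[where a="2 * \<bar>\<sigma>\<bar>" and c=1]) auto
          fix x :: "'t \<times> real"
          have "max (max b (snd x)) \<sigma> = \<sigma> + max 0 (snd x - \<sigma>)" using False by (auto simp: max_def)
          then have "?W (max b (snd x)) \<le> \<sigma> + max 0 (snd x - \<sigma>)" using upW[of "max b (snd x)"] by linarith
          then show "indicator {t} (fst x) * ?W (max b (snd x)) \<le> indicator {t} (fst x) * (\<sigma> + max 0 (snd x - \<sigma>))"
            by (intro mult_left_mono) (auto simp: indicator_def)
        qed
        also have "\<dots> = \<sigma> * Pt t + I t (\<lambda>v. max 0 (v - \<sigma>))"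
          unfolding I_def by (rule I_const_add[OF imax])
        finally show ?thesis unfolding ZP[of b t] using True by simp
      next
        case F: False
        have "?W b * Pt t \<le> \<sigma> * Pt t" using upW[of b] False by (intro mult_right_mono Pt_nonneg) simp
        then show ?thesis unfolding ZP[of b t] using F by simp
      qed
      then have "(\<Sum>t\<in>UNIV. Z b t * Pt t) \<le> (\<Sum>t\<in>UNIV. (if \<sigma> < thr t then - cf * Pt t + I t (\<lambda>v. max 0 (v - \<sigma>)) else 0) + \<sigma> * Pt t)"
        by (intro sum_mono)
      also have "\<dots> = cp + \<sigma>"
        unfolding sum.distrib cp_dec by (simp add: sum_distrib_left[symmetric] sum_Pt)
      finally show ?thesis using step[of b] False by simp
    qed
    have lo: "phi \<sigma> w (Suc m) b \<le> W2 M cf cp \<sigma> thr (Suc m) b" for b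
    proof (cases "\<sigma> \<le> b")
      case True then show ?thesis by (simp add: phi_def)
    next
      case False
      then have b: "b < \<sigma>" by simp
      define K where "K = b + (\<sigma> - b) * (1 - (1 - w) ^ m)"
      have "(if \<sigma> < thr t then - cf * Pt t + I t (\<lambda>v. max 0 (v - \<sigma>)) else 0) + K * Pt t
          + (\<sigma> - K) * (if \<sigma> < thr t then I t (indicator {\<sigma><..}) else 0) \<le> Z b t * Pt t" for t
      proof (cases "\<sigma> < thr t")
        case True
        have "I t (\<lambda>v. K + (max 0 (v - \<sigma>) + (\<sigma> - K) * indicator {\<sigma><..} v)) \<le> I t (\<lambda>v. ?W (max b v))"
          unfolding I_def
        proof (rule integral_mono[OF _ intW])
          show "integrable M (\<lambda>x. indicator {t} (fst x) * (K + (max 0 (snd x - \<sigma>) + (\<sigma> - K) * indicator {\<sigma><..} (snd x))))"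
          proof (rule int_ind_lin[where a="\<bar>K\<bar> + \<bar>\<sigma>\<bar> + \<bar>\<sigma> - K\<bar>" and c=1])
            show "(\<lambda>v. K + (max 0 (v - \<sigma>) + (\<sigma> - K) * indicator {\<sigma><..} v)) \<in> borel_measurable borel"
              by measurable
            fix v :: real
            show "\<bar>K + (max 0 (v - \<sigma>) + (\<sigma> - K) * indicator {\<sigma><..} v)\<bar> \<le> \<bar>K\<bar> + \<bar>\<sigma>\<bar> + \<bar>\<sigma> - K\<bar> + 1 * \<bar>v\<bar>"
              by (auto simp: indicator_def)
          qed simp
          fix x :: "'t \<times> real"
          have e1: "max 0 (max b (snd x) - \<sigma>) = max 0 (snd x - \<sigma>)" using b by (auto simp: max_def)
          have e2: "indicator {\<sigma><..} (max b (snd x)) = (indicator {\<sigma><..} (snd x) :: real)"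
            using b by (auto simp: indicator_def max_def)
          have "max 0 (snd x - \<sigma>) + K + (\<sigma> - K) * indicator {\<sigma><..} (snd x) \<le> phi \<sigma> w m (max b (snd x))"
            using phi_step2[OF b w01, of "max b (snd x)" m] unfolding K_def e1 e2 by simp
          then have "K + (max 0 (snd x - \<sigma>) + (\<sigma> - K) * indicator {\<sigma><..} (snd x)) \<le> ?W (max b (snd x))"
            using loW[of "max b (snd x)"] by linarith
          then show "indicator {t} (fst x) * (K + (max 0 (snd x - \<sigma>) + (\<sigma> - K) * indicator {\<sigma><..} (snd x))) \<le> indicator {t} (fst x) * ?W (max b (snd x))"
            by (intro mult_left_mono) (auto simp: indicator_def)
        qed
        moreover have "I t (\<lambda>v. K + (max 0 (v - \<sigma>) + (\<sigma> - K) * indicator {\<sigma><..} v))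
            = K * Pt t + (I t (\<lambda>v. max 0 (v - \<sigma>)) + (\<sigma> - K) * I t (indicator {\<sigma><..}))"
        proof -
          have ii: "integrable M (\<lambda>x. indicator {t} (fst x) * (max 0 (snd x - \<sigma>) + (\<sigma> - K) * indicator {\<sigma><..} (snd x)))"
            by (rule int_ind_lin[where a="\<bar>\<sigma>\<bar> + \<bar>\<sigma> - K\<bar>" and c=1]) (auto simp: indicator_def)
          have "(\<integral>x. indicator {t} (fst x) * (max 0 (snd x - \<sigma>) + (\<sigma> - K) * indicator {\<sigma><..} (snd x)) \<partial>M)
              = (\<integral>x. indicator {t} (fst x) * max 0 (snd x - \<sigma>) + (\<sigma> - K) * (indicator {t} (fst x) * indicator {\<sigma><..} (snd x)) \<partial>M)"
            by (simp add: algebra_simps)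
          also have "\<dots> = I t (\<lambda>v. max 0 (v - \<sigma>)) + (\<sigma> - K) * I t (indicator {\<sigma><..})"
            unfolding I_def using imax iind
            by (subst Bochner_Integration.integral_add) (auto intro: integrable_mult_right)
          finally show ?thesis unfolding I_def using I_const_add[OF ii, of K] by simp
        qed
        ultimately show ?thesis unfolding ZP[of b t] using True by (simp add: algebra_simps)
      next
        case F: False
        have "K \<le> ?W b" using loW[of b] b unfolding phi_def K_def by simp
        then have "K * Pt t \<le> ?W b * Pt t" by (intro mult_right_mono Pt_nonneg)
        then show ?thesis unfolding ZP[of b t] using F by simp
      qed
      then have "(\<Sum>t\<in>UNIV. (if \<sigma> < thr t then - cf * Pt t + I t (\<lambda>v. max 0 (v - \<sigma>)) else 0) + K * Pt t
          + (\<sigma> - K) * (if \<sigma> < thr t then I t (indicator {\<sigma><..}) else 0)) \<le> (\<Sum>t\<in>UNIV. Z b t * Pt t)"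
        by (intro sum_mono)
      moreover have "(\<Sum>t\<in>UNIV. (if \<sigma> < thr t then - cf * Pt t + I t (\<lambda>v. max 0 (v - \<sigma>)) else 0) + K * Pt t
          + (\<sigma> - K) * (if \<sigma> < thr t then I t (indicator {\<sigma><..}) else 0)) = cp + K + (\<sigma> - K) * w"
        unfolding sum.distrib cp_dec w_dec by (simp add: sum_distrib_left[symmetric] sum_Pt)
      ultimately show ?thesis using step[OF b] phi_step1[OF b, of w m] unfolding K_def by linarith
    qed
    have mono: "mono (W2 M cf cp \<sigma> thr (Suc m))"
    proof (rule monoI)
      fix b1 b2 :: real assume le: "b1 \<le> b2"
      show "W2 M cf cp \<sigma> thr (Suc m) b1 \<le> W2 M cf cp \<sigma> thr (Suc m) b2"
      proof (cases "\<sigma> \<le> b1")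
        case True then show ?thesis using le by simp
      next
        case False
        show ?thesis
        proof (cases "\<sigma> \<le> b2")
          case True
          then show ?thesis using up[of b1] False le by simp
        next
          case F2: False
          have "Z b1 t * Pt t \<le> Z b2 t * Pt t" for t
          proof (cases "\<sigma> < thr t")
            case True
            have "I t (\<lambda>v. ?W (max b1 v)) \<le> I t (\<lambda>v. ?W (max b2 v))"
              unfolding I_def
              by (intro integral_mono intW mult_left_mono monoD[OF monoW])
                 (use le in \<open>auto simp: indicator_def\<close>)
            then show ?thesis unfolding ZP[of b1 t] ZP[of b2 t] using True by simp
          next
            case F: False
            have "?W b1 * Pt t \<le> ?W b2 * Pt t"
              by (intro mult_right_mono Pt_nonneg monoD[OF monoW] le)
            then show ?thesis unfolding ZP[of b1 t] ZP[of b2 t] using F by simp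
          qed
          then have "(\<Sum>t\<in>UNIV. Z b1 t * Pt t) \<le> (\<Sum>t\<in>UNIV. Z b2 t * Pt t)" by (intro sum_mono)
          then show ?thesis using step[of b1] step[of b2] False F2 by simp
        qed
      qed
    qed
    show ?case using mono up lo by blast
  qed
qed

end

lemma find_unique:
  assumes j: "j < N" and P: "P j" and u: "\<And>k. k < N \<Longrightarrow> P k \<Longrightarrow> k = j"
  shows "find P [0..<N] = Some j"
  unfolding find_Some_iff
proof (intro exI[of _ j] conjI allI impI)
  show "j < length [0..<N]" using j by simp
  show "P ([0..<N] ! j)" using j P by simp
  show "j = [0..<N] ! j" using j by simp
  fix l assume l: "l < j"
  show "\<not> P ([0..<N] ! l)"
  proof
    assume "P ([0..<N] ! l)"
    then have "P l" using l j by simp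
    then have "l = j" using u[of l] l j by simp
    then show False using l by simp
  qed
qed

lemma find_some_range:
  assumes "find P [0..<N] = Some j"
  shows "j < N \<and> P j"
proof -
  from assms obtain k where "k < length [0..<N]" "P ([0..<N] ! k)" "j = [0..<N] ! k"
    unfolding find_Some_iff by blast
  then show ?thesis by simp
qed

locale pol_ctx = pandora N D cF cP for N and D :: "nat \<Rightarrow> ('t::finite \<times> real) measure" and cF cP +
  fixes cls :: "nat \<Rightarrow> nat" and i j0 :: nat
  assumes j0: "j0 < N" "cls j0 = i"
    and cls_ident: "\<And>j j'. j < N \<Longrightarrow> j' < N \<Longrightarrow> cls j = cls j' \<Longrightarrow>
                      D j = D j' \<and> cF j = cF j' \<and> cP j = cP j'"
begin

definition sM where "sM = Max {max (sigF (D j) (cF j)) (sigP (D j) (cF j) (cP j)) | j. j < N}"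

lemma thr_le: assumes "j < N" shows "sigF (D j) (cF j) \<le> sM \<and> sigP (D j) (cF j) (cP j) \<le> sM"
proof -
  have "{max (sigF (D j) (cF j)) (sigP (D j) (cF j) (cP j)) | j. j < N}
      = (\<lambda>j. max (sigF (D j) (cF j)) (sigP (D j) (cF j) (cP j))) ` {..<N}" by auto
  then have fin: "finite {max (sigF (D j) (cF j)) (sigP (D j) (cF j) (cP j)) | j. j < N}" by simp
  have mem: "max (sigF (D j) (cF j)) (sigP (D j) (cF j) (cP j)) \<in> {max (sigF (D j) (cF j)) (sigP (D j) (cF j) (cP j)) | j. j < N}"
    using assms by auto
  have "max (sigF (D j) (cF j)) (sigP (D j) (cF j) (cP j)) \<le> sM"
    unfolding sM_def by (rule Max_ge[OF fin mem])
  then show ?thesis by simp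
qed

lemma same: "j < N \<Longrightarrow> cls j = i \<Longrightarrow> D j = D j0 \<and> cF j = cF j0 \<and> cP j = cP j0"
  using cls_ident[of j j0] j0 by simp

definition mc :: "(nat \<Rightarrow> 't bstate) \<Rightarrow> nat" where
  "mc s = card {j. j < N \<and> cls j = i \<and> s j = Closed}"

lemma mc_fin: "finite {j. j < N \<and> cls j = i \<and> s j = Closed}" by simp

lemma mc_le: "mc s \<le> N"
proof -
  have "mc s \<le> card {..<N}" unfolding mc_def by (intro card_mono) auto
  then show ?thesis by simp
qed

lemma mc_zero: "mc s = 0 \<Longrightarrow> j < N \<Longrightarrow> cls j = i \<Longrightarrow> s j \<noteq> Closed"
  unfolding mc_def using mc_fin[of s] by auto

lemma mc_pos: "mc s = Suc m \<Longrightarrow> \<exists>j<N. cls j = i \<and> s j = Closed"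
  unfolding mc_def by (metis (mono_tags, lifting) card.empty empty_Collect_eq nat.distinct(1))

lemma mc_upd: assumes "j < N" "cls j = i" "s j = Closed" "b \<noteq> Closed"
  shows "mc (s(j := b)) = mc s - 1"
proof -
  have "{k. k < N \<and> cls k = i \<and> (s(j := b)) k = Closed} = {k. k < N \<and> cls k = i \<and> s k = Closed} - {j}"
    using assms by auto
  then show ?thesis unfolding mc_def using assms by (simp add: card_Diff_singleton)
qed

definition inv1 :: "(nat \<Rightarrow> 't bstate) \<Rightarrow> bool" where
  "inv1 s = (\<forall>j<N. s j = Closed \<or> (\<exists>v. s j = Full v))"

lemma pol1_eq:
  assumes "inv1 s" "mc s \<le> n" and sF: "sigF (D j0) (cF j0) = sM"
  shows "polf N D cF cP (polF N D cF cP cls i) n s = W1 (D j0) (cF j0) sM (mc s) (best N s)"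
  using assms(1,2)
proof (induction n arbitrary: s)
  case 0
  then show ?case by simp
next
  case (Suc n)
  note IH = Suc.IH and prems = Suc.prems
  define b where "b = best N s"
  show ?case
  proof (cases "sM \<le> b")
    case True
    have "stop_rule N D cF cP s"
      unfolding stop_rule_def
    proof (intro allI impI)
      fix j assume j: "j < N"
      then show "case s j of Closed \<Rightarrow> sigF (D j) (cF j) \<le> best N s \<and> sigP (D j) (cF j) (cP j) \<le> best N s
          | Part t \<Rightarrow> sigFc (D j) (cF j) t \<le> best N s | Full v \<Rightarrow> True"
        using prems(1) thr_le[OF j] True unfolding inv1_def b_def by (auto split: bstate.split)
    qed
    then have "polF N D cF cP cls i s = None" unfolding polF_def by simp
    then show ?thesis using True unfolding b_def by (cases "mc s") auto
  next
    case False
    show ?thesis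
    proof (cases "mc s")
      case 0
      have "find (\<lambda>j. cls j = i \<and> s j = Closed) [0..<N] = None"
        unfolding find_None_iff using mc_zero[OF 0] by auto
      then have "polF N D cF cP cls i s = None" unfolding polF_def by simp
      then show ?thesis using 0 by simp
    next
      case (Suc m)
      obtain j1 where j1: "j1 < N" "cls j1 = i" "s j1 = Closed" using mc_pos[OF Suc] by blast
      have nstop: "\<not> stop_rule N D cF cP s"
      proof
        assume "stop_rule N D cF cP s"
        then have "sigF (D j1) (cF j1) \<le> best N s" unfolding stop_rule_def using j1 by force
        then show False using same[OF j1(1,2)] sF False unfolding b_def by simp
      qed
      obtain j where fj: "find (\<lambda>j. cls j = i \<and> s j = Closed) [0..<N] = Some j"
      proof (cases "find (\<lambda>j. cls j = i \<and> s j = Closed) [0..<N]")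
        case None
        then show ?thesis using j1 unfolding find_None_iff by auto
      qed
      then have j: "j < N" "cls j = i" "s j = Closed" using find_some_range by blast+
      have pj: "polF N D cF cP cls i s = Some (j, FOpen)" unfolding polF_def using nstop fj by simp
      have eq: "polf N D cF cP (polF N D cF cP cls i) n (s(j := Full v)) = W1 (D j0) (cF j0) sM m (max b v)" for v
      proof -
        have i1: "inv1 (s(j := Full v))" using prems(1) unfolding inv1_def by auto
        have m1: "mc (s(j := Full v)) = m" using mc_upd[of j s "Full v"] j \<open>mc s = Suc m\<close> by simp
        have b1: "best N (s(j := Full v)) = max b v" using best_upd_full[of j N s v] j unfolding b_def by simp
        have "polf N D cF cP (polF N D cF cP cls i) n (s(j := Full v))
            = W1 (D j0) (cF j0) sM (mc (s(j := Full v))) (best N (s(j := Full v)))"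
          by (rule IH[OF i1]) (use m1 prems(2) \<open>mc s = Suc m\<close> in \<open>simp add: fun_upd_def\<close>)
        then show ?thesis by (simp only: m1 b1)
      qed
      have "polf N D cF cP (polF N D cF cP cls i) (Suc n) s
          = - cF j + (\<integral>x. polf N D cF cP (polF N D cF cP cls i) n (s(j := Full (snd x))) \<partial>D j)"
        using pj j by simp
      also have "\<dots> = - cF j0 + (\<integral>x. W1 (D j0) (cF j0) sM m (max b (snd x)) \<partial>D j0)"
        using same[OF j(1,2)] eq by simp
      also have "\<dots> = W1 (D j0) (cF j0) sM (mc s) (best N s)"
        using Suc False unfolding b_def by simp
      finally show ?thesis .
    qed
  qed
qed

definition inv2 :: "(nat \<Rightarrow> 't bstate) \<Rightarrow> bool" where
  "inv2 s = (\<forall>j<N. s j = Closed \<or> (\<exists>v. s j = Full v)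
      \<or> (\<exists>t. s j = Part t \<and> cls j = i \<and> \<not> sM < sigFc (D j0) (cF j0) t))"

lemma pol2_eq:
  assumes "inv2 s" "2 * mc s \<le> n" and sP: "sigP (D j0) (cF j0) (cP j0) = sM"
  shows "polf N D cF cP (polP N D cF cP cls i) n s
      = W2 (D j0) (cF j0) (cP j0) sM (sigFc (D j0) (cF j0)) (mc s) (best N s)"
  using assms(1,2)
proof (induction n arbitrary: s rule: less_induct)
  case (less n)
  let ?thr = "sigFc (D j0) (cF j0)"
  let ?pol = "polP N D cF cP cls i"
  let ?hp = "\<lambda>s j. cls j = i \<and> (\<exists>t. s j = Part t \<and> sigFc (D j) (cF j) t > sigP (D j) (cF j) (cP j))"
  define b where "b = best N s"
  have nohigh: "find (?hp s) [0..<N] = None"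
    unfolding find_None_iff
  proof (intro notI, elim exE conjE)
    fix j t assume a: "j \<in> set [0..<N]" "cls j = i" "s j = Part t"
      "sigP (D j) (cF j) (cP j) < sigFc (D j) (cF j) t"
    then have jN: "j < N" by simp
    have "\<not> sM < ?thr t" using less.prems(1) jN a(3) unfolding inv2_def by force
    then show False using a same[OF jN a(2)] sP by simp
  qed
  show ?case
  proof (cases n)
    case 0
    then show ?thesis using less.prems by simp
  next
    case (Suc n')
    show ?thesis
    proof (cases "sM \<le> b")
      case True
      have "stop_rule N D cF cP s"
        unfolding stop_rule_def
      proof (intro allI impI)
        fix j assume j: "j < N"
        show "case s j of Closed \<Rightarrow> sigF (D j) (cF j) \<le> best N s \<and> sigP (D j) (cF j) (cP j) \<le> best N s
            | Part t \<Rightarrow> sigFc (D j) (cF j) t \<le> best N s | Full v \<Rightarrow> True"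
        proof (cases "s j")
          case (Part t)
          then have "cls j = i" "\<not> sM < ?thr t" using less.prems(1) j unfolding inv2_def by auto
          then show ?thesis using Part same[OF j] True unfolding b_def by simp
        qed (use thr_le[OF j] True b_def in auto)
      qed
      then have "?pol s = None" unfolding polP_def by simp
      then show ?thesis using True Suc unfolding b_def by (cases "mc s") auto
    next
      case False
      show ?thesis
      proof (cases "mc s")
        case 0
        have "find (\<lambda>j. cls j = i \<and> s j = Closed) [0..<N] = None"
          unfolding find_None_iff using mc_zero[OF 0] by auto
        then have "?pol s = None" unfolding polP_def using nohigh by simp
        then show ?thesis using 0 Suc by simp
      next
        case (Suc m)
        obtain j1 where j1: "j1 < N" "cls j1 = i" "s j1 = Closed" using mc_pos[OF Suc] by blast
        have nstop: "\<not> stop_rule N D cF cP s"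
        proof
          assume "stop_rule N D cF cP s"
          then have "sigP (D j1) (cF j1) (cP j1) \<le> best N s" unfolding stop_rule_def using j1 by force
          then show False using same[OF j1(1,2)] sP False unfolding b_def by simp
        qed
        obtain j where fj: "find (\<lambda>j. cls j = i \<and> s j = Closed) [0..<N] = Some j"
        proof (cases "find (\<lambda>j. cls j = i \<and> s j = Closed) [0..<N]")
          case None
          then show ?thesis using j1 unfolding find_None_iff by auto
        qed
        then have j: "j < N" "cls j = i" "s j = Closed" using find_some_range by blast+
        have pj: "?pol s = Some (j, POpen)" unfolding polP_def using nstop fj nohigh by simp
        have n': "2 * m + 1 \<le> n'" using less.prems(2) \<open>mc s = Suc m\<close> \<open>n = Suc n'\<close> by simp
        define Z where "Z t = (if sM < ?thr t then - cF j0 + cond_exp (D j0) t (\<lambda>v. W2 (D j0) (cF j0) (cP j0) sM ?thr m (max b v))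
            else W2 (D j0) (cF j0) (cP j0) sM ?thr m b)" for t
        have eqZ: "polf N D cF cP ?pol n' (s(j := Part t)) = Z t" for t
        proof -
          let ?s' = "s(j := Part t)"
          have bs': "best N ?s' = b" using best_upd_nonfull[of s j "Part t" N] j unfolding b_def by simp
          have mcs': "mc ?s' = m" using mc_upd[of j s "Part t"] j Suc by simp
          show ?thesis
          proof (cases "sM < ?thr t")
            case True
            obtain n'' where n'': "n' = Suc n''" using n' by (cases n') auto
            have ns': "\<not> stop_rule N D cF cP ?s'"
            proof
              assume "stop_rule N D cF cP ?s'"
              then have "sigFc (D j) (cF j) t \<le> best N ?s'" unfolding stop_rule_def using j by force
              then show False using same[OF j(1,2)] True False bs' by simp
            qed
            have fh: "find (?hp ?s') [0..<N] = Some j"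
            proof (rule find_unique[OF j(1)])
              show "?hp ?s' j" using True same[OF j(1,2)] sP j by simp
              fix k assume k: "k < N" "?hp ?s' k"
              show "k = j"
              proof (rule ccontr)
                assume "k \<noteq> j"
                then have "?hp s k" using k by simp
                then have "find (?hp s) [0..<N] \<noteq> None" unfolding find_None_iff using k by auto
                then show False using nohigh by simp
              qed
            qed
            have pj': "?pol ?s' = Some (j, FOpen)" unfolding polP_def using ns' fh by simp
            have eq: "polf N D cF cP ?pol n'' (s(j := Full v)) = W2 (D j0) (cF j0) (cP j0) sM ?thr m (max b v)" for v
            proof -
              have i1: "inv2 (s(j := Full v))" using less.prems(1) unfolding inv2_def by auto
              have m1: "mc (s(j := Full v)) = m" using mc_upd[of j s "Full v"] j Suc by simp
              have b1: "best N (s(j := Full v)) = max b v" using best_upd_full[of j N s v] j unfolding b_def by simp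
              have "polf N D cF cP ?pol n'' (s(j := Full v))
                  = W2 (D j0) (cF j0) (cP j0) sM ?thr (mc (s(j := Full v))) (best N (s(j := Full v)))"
                by (rule less.IH[OF _ i1]) (use m1 n' n'' \<open>n = Suc n'\<close> in \<open>simp_all add: fun_upd_def\<close>)
              then show ?thesis by (simp only: m1 b1)
            qed
            have "polf N D cF cP ?pol n' ?s' = - cF j + cond_exp (D j) t (\<lambda>v. polf N D cF cP ?pol n'' (?s'(j := Full v)))"
              using pj' j n'' by simp
            also have "\<dots> = Z t" using same[OF j(1,2)] eq True unfolding Z_def by simp
            finally show ?thesis .
          next
            case F: False
            have i2: "inv2 ?s'" using less.prems(1) F j unfolding inv2_def by auto
            have "polf N D cF cP ?pol n' ?s'
                = W2 (D j0) (cF j0) (cP j0) sM ?thr (mc ?s') (best N ?s')"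
              by (rule less.IH[OF _ i2]) (use mcs' n' \<open>n = Suc n'\<close> in \<open>simp_all add: fun_upd_def\<close>)
            then show ?thesis using F unfolding Z_def by (simp only: mcs' bs' if_False)
          qed
        qed
        have "polf N D cF cP ?pol n s = - cP j + (\<integral>x. polf N D cF cP ?pol n' (s(j := Part (fst x))) \<partial>D j)"
          using pj j \<open>n = Suc n'\<close> by simp
        also have "\<dots> = - cP j0 + (\<integral>x. Z (fst x) \<partial>D j0)"
          using same[OF j(1,2)] eqZ by simp
        also have "\<dots> = W2 (D j0) (cF j0) (cP j0) sM ?thr (mc s) (best N s)"
          using Suc False unfolding b_def Z_def by simp
        finally show ?thesis .
      qed
    qed
  qed
qed

end

lemma final_arith:
  fixes u a \<sigma> OPT pol :: real and n :: nat
  assumes u: "0 \<le> u" "u \<le> 1" and a: "0 < a" "a < real n"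
    and opt: "OPT \<le> max 0 \<sigma>" and pol: "phi \<sigma> u n 0 \<le> pol"
  shows "(1 - (1 - u) powr a) * OPT \<le> pol"
proof -
  have p0: "0 \<le> (1 - u) powr a" by simp
  have p1: "(1 - u) powr a \<le> 1" using u a by (intro powr_le1) auto
  have f0: "0 \<le> 1 - (1 - u) powr a" using p1 by simp
  show ?thesis
  proof (cases "\<sigma> \<le> 0")
    case True
    then have "phi \<sigma> u n 0 = 0" unfolding phi_def by simp
    moreover have "(1 - (1 - u) powr a) * OPT \<le> 0"
      using opt True f0 by (intro mult_nonneg_nonpos) auto
    ultimately show ?thesis using pol by simp
  next
    case False
    then have phi: "phi \<sigma> u n 0 = \<sigma> * (1 - (1 - u) ^ n)" unfolding phi_def by simp
    have "(1 - u) ^ n \<le> (1 - u) powr a"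
    proof (cases "u = 1")
      case True
      have "0 < n" using a by auto
      then show ?thesis using True by (simp add: zero_power)
    next
      case False
      then have "0 < 1 - u" using u by simp
      then have "(1 - u) ^ n = (1 - u) powr (real n)" by (simp add: powr_realpow)
      also have "\<dots> \<le> (1 - u) powr a" using a u by (intro powr_mono') auto
      finally show ?thesis .
    qed
    then have "\<sigma> * (1 - (1 - u) powr a) \<le> \<sigma> * (1 - (1 - u) ^ n)"
      using False by (intro mult_left_mono) auto
    moreover have "(1 - (1 - u) powr a) * OPT \<le> (1 - (1 - u) powr a) * \<sigma>"
      using opt False f0 by (intro mult_left_mono) auto
    ultimately show ?thesis using pol phi by (simp add: mult.commute)
  qed
qed

theorem mainTheorem5:
  fixes N K i j0 :: nat and \<theta> :: real
    and D :: "nat \<Rightarrow> ('t::finite \<times> real) measure"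
    and cF cP :: "nat \<Rightarrow> real" and cls :: "nat \<Rightarrow> nat"
  assumes prob: "\<And>j. j < N \<Longrightarrow> prob_space (D j)"
    and sets: "\<And>j. j < N \<Longrightarrow> sets (D j) = sets (count_space UNIV \<Otimes>\<^sub>M borel)"
    and nonneg: "\<And>j. j < N \<Longrightarrow> AE x in D j. snd x \<ge> 0"
    and integ: "\<And>j. j < N \<Longrightarrow> integrable (D j) snd"
    and cFpos: "\<And>j. j < N \<Longrightarrow> cF j > 0"
    and cPpos: "\<And>j. j < N \<Longrightarrow> cP j > 0"
    and cls_range: "\<And>j. j < N \<Longrightarrow> cls j < K"
    and cls_ident: "\<And>j j'. j < N \<Longrightarrow> j' < N \<Longrightarrow> cls j = cls j' \<Longrightarrow>
                      D j = D j' \<and> cF j = cF j' \<and> cP j = cP j'"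
    and theta: "\<theta> > 0"
    and sizes: "\<And>k. k < K \<Longrightarrow> real (card {j. j < N \<and> cls j = k}) > \<theta> * real N"
    and i: "i < K" and j0: "j0 < N" "cls j0 = i"
    and attains: "max (sigF (D j0) (cF j0)) (sigP (D j0) (cF j0) (cP j0))
                   = Max {max (sigF (D j) (cF j)) (sigP (D j) (cF j) (cP j)) | j. j < N}"
  shows
   "(let \<sigma>M = Max {max (sigF (D j) (cF j)) (sigP (D j) (cF j) (cP j)) | j. j < N};
         sF = sigF (D j0) (cF j0);
         sP = sigP (D j0) (cF j0) (cP j0);
         u = measure (D j0) {x. snd x > sF};
         q = measure (D j0) {x. sigFc (D j0) (cF j0) (fst x) > sP};
         p = measure (D j0) {x. snd x > sP \<and> sigFc (D j0) (cF j0) (fst x) > sP} / q;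
         OPT = opt_value N D cF cP
     in (sF = \<sigma>M \<longrightarrow>
           pol_value N D cF cP (polF N D cF cP cls i) \<ge> (1 - (1 - u) powr (\<theta> * real N)) * OPT)
      \<and> (sP = \<sigma>M \<longrightarrow>
           pol_value N D cF cP (polP N D cF cP cls i) \<ge> (1 - (1 - p * q) powr (\<theta> * real N)) * OPT))"
proof -
  have pb: "pbox (D j)" if "j < N" for j
    using prob[OF that] sets[OF that] integ[OF that] by (simp add: pbox_def)
  interpret pc: pol_ctx N D cF cP cls i j0
  proof (rule pol_ctx.intro)
    show "pandora N D cF cP"
    proof (rule pandora.intro)
      show "\<And>j. j < N \<Longrightarrow> pbox (D j)" by (rule pb)
      show "\<And>j. j < N \<Longrightarrow> 0 < cF j" by (rule cFpos)
      show "\<And>j. j < N \<Longrightarrow> 0 < cP j" by (rule cPpos)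
    qed
    show "pol_ctx_axioms N D cF cP cls i j0"
    proof (rule pol_ctx_axioms.intro)
      show "j0 < N" by (rule j0(1))
      show "cls j0 = i" by (rule j0(2))
      show "\<And>j j'. j < N \<Longrightarrow> j' < N \<Longrightarrow> cls j = cls j' \<Longrightarrow> D j = D j' \<and> cF j = cF j' \<and> cP j = cP j'"
        by (rule cls_ident)
    qed
  qed
  interpret P: pbox "D j0" by (rule pb[OF j0(1)])
  define \<sigma> where "\<sigma> = pc.sM"
  have sMdef: "Max {max (sigF (D j) (cF j)) (sigP (D j) (cF j) (cP j)) | j. j < N} = \<sigma>"
    unfolding \<sigma>_def pc.sM_def ..
  define ni where "ni = card {j. j < N \<and> cls j = i}"
  have mc0: "pc.mc (\<lambda>_. Closed) = ni" unfolding pc.mc_def ni_def by simp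
  have niN: "ni \<le> N" using pc.mc_le[of "\<lambda>_. Closed"] mc0 by simp
  have N0: "0 < real N" using j0 by simp
  have b0: "best N (\<lambda>_. Closed :: 't bstate) = 0" unfolding best_def by simp
  have a: "0 < \<theta> * real N" "\<theta> * real N < real ni"
    using theta N0 sizes[OF i] unfolding ni_def by auto
  have OPT: "opt_value N D cF cP \<le> max 0 \<sigma>"
  proof -
    have "optf N D cF cP (2 * N) (\<lambda>_. Closed) \<le> max 0 \<sigma> + pc.S (\<lambda>_. Closed) (max 0 \<sigma>)"
    proof (rule pc.opt_bound)
      show "best N (\<lambda>_. Closed :: 't bstate) \<le> max 0 \<sigma>" unfolding best_def by simp
      fix j assume "j < N" "Closed = (Closed :: 't bstate)"
      then show "sigF (D j) (cF j) \<le> max 0 \<sigma> \<and> sigP (D j) (cF j) (cP j) \<le> max 0 \<sigma>"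
        using pc.thr_le[of j] unfolding \<sigma>_def by auto
    qed
    moreover have "pc.S (\<lambda>_. Closed) (max 0 \<sigma>) = 0" unfolding pc.S_def pc.sterm_def by simp
    ultimately show ?thesis unfolding opt_value_def by simp
  qed
  have cF0: "0 < cF j0" and cP0: "0 < cP j0" using cFpos cPpos j0 by auto
  have part1: "(1 - (1 - measure (D j0) {x. snd x > sigF (D j0) (cF j0)}) powr (\<theta> * real N)) * opt_value N D cF cP
      \<le> pol_value N D cF cP (polF N D cF cP cls i)" if sF: "sigF (D j0) (cF j0) = \<sigma>"
  proof -
    let ?u = "measure (D j0) {x. \<sigma> < snd x}"
    have pv: "pol_value N D cF cP (polF N D cF cP cls i) = W1 (D j0) (cF j0) \<sigma> ni 0"
      unfolding pol_value_def \<sigma>_def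
      using pc.pol1_eq[of "\<lambda>_. Closed" "2 * N"] sF niN mc0 b0
      by (simp add: pc.inv1_def \<sigma>_def)
    have c: "(\<integral>x. max 0 (snd x - \<sigma>) \<partial>D j0) = cF j0" using P.sigF_root[OF cF0] sF by simp
    have "phi \<sigma> ?u ni 0 \<le> W1 (D j0) (cF j0) \<sigma> ni 0"
      using P.W1_props[OF c refl, of ni] by blast
    then show ?thesis unfolding pv using sF
      by (intro final_arith[OF _ _ a OPT]) auto
  qed
  have part2: "(1 - (1 - measure (D j0) {x. snd x > sigP (D j0) (cF j0) (cP j0) \<and> sigFc (D j0) (cF j0) (fst x) > sigP (D j0) (cF j0) (cP j0)}
        / measure (D j0) {x. sigFc (D j0) (cF j0) (fst x) > sigP (D j0) (cF j0) (cP j0)}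
        * measure (D j0) {x. sigFc (D j0) (cF j0) (fst x) > sigP (D j0) (cF j0) (cP j0)}) powr (\<theta> * real N)) * opt_value N D cF cP
      \<le> pol_value N D cF cP (polP N D cF cP cls i)" if sP: "sigP (D j0) (cF j0) (cP j0) = \<sigma>"
  proof -
    let ?thr = "sigFc (D j0) (cF j0)"
    define w where "w = measure (D j0) {x. \<sigma> < snd x \<and> \<sigma> < ?thr (fst x)}"
    define q where "q = measure (D j0) {x. \<sigma> < ?thr (fst x)}"
    have wq: "w / q * q = w"
    proof (cases "q = 0")
      case True
      have sq: "{x. \<sigma> < ?thr (fst x)} \<in> sets (D j0)"
      proof -
        have [measurable]: "(\<lambda>x. ?thr (fst x)) \<in> borel_measurable (D j0)" by (rule P.fstfun_meas)
        have "{x \<in> space (D j0). \<sigma> < ?thr (fst x)} \<in> sets (D j0)" by measurable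
        then show ?thesis by (simp add: P.space_eq)
      qed
      have "w \<le> q" unfolding w_def q_def by (rule P.finite_measure_mono[OF _ sq]) auto
      moreover have "0 \<le> w" unfolding w_def by simp
      ultimately have "w = 0" using True by simp
      then show ?thesis by simp
    qed simp
    have pv: "pol_value N D cF cP (polP N D cF cP cls i) = W2 (D j0) (cF j0) (cP j0) \<sigma> ?thr ni 0"
      unfolding pol_value_def \<sigma>_def
      using pc.pol2_eq[of "\<lambda>_. Closed" "2 * N"] sP niN mc0 b0
      by (simp add: pc.inv2_def \<sigma>_def)
    have cp: "P.G (cF j0) \<sigma> = cP j0" using P.sigP_root[OF cF0 cP0] sP by simp
    have thr: "cond_exp (D j0) t (\<lambda>v. max 0 (v - ?thr t)) = cF j0" if "0 < P.Pt t" for t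
      by (rule P.sigFc_root[OF cF0 that])
    have "phi \<sigma> w ni 0 \<le> W2 (D j0) (cF j0) (cP j0) \<sigma> ?thr ni 0"
      using P.W2_props[OF cF0 cp thr w_def, of ni] by blast
    moreover have "0 \<le> w" "w \<le> 1" unfolding w_def by auto
    ultimately show ?thesis unfolding pv using sP wq
      by (intro final_arith[OF _ _ a OPT]) (auto simp: w_def q_def)
  qed
  show ?thesis
    unfolding Let_def sMdef using part1 part2 by auto
qed

end
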